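(* For every $\lambda$-calculus value $V$ and variable $x$, writing $I=\lambda z.z$: $\mathcal V'[\![I(xV)]\!]\not\cong_\pi \mathcal V'[\![xV]\!]$ and $\mathcal V[\![I(xV)]\!]\not\cong_\pi\mathcal V[\![xV]\!]$, where $\mathcal V,\mathcal V'$ are Milner's two call-by-value encodings into the $\pi$-calculus and $\cong_\pi$ is barbed congruence in the $\pi$-calculus.
   Context: $\lambda$-terms (possibly open): $M::=x\mid\lambda x.M\mid MM$; values $V::=x\mid\lambda x.M$. $\pi$-calculus: polyadic, well-sorted, with processes $P ::= 0\mid a(\tilde b).P\mid\overline a\langle\tilde b\rangle.P\mid(\nu a)P\mid P|P\mid\ !a(\tilde b).P\mid F\langle\tilde a\rangle$ and abstractions $F::=(\tilde a)P\mid K$ (constants $K\triangleq(\tilde x)P$, $P$ name-closed); $\overline a(y).P$ abbreviates $(\nu y)\overline a\langle y\rangle.P$. Standard operational semantics; $P\Longrightarrow P'$ is a sequence of internal steps, $P\Downarrow_a$ means $P\Longrightarrow P'$ with $P'$ able to perform an output with subject $a$. Barbed bisimilarity $\dot\approx$ is the largest symmetric relation such that $P\dot\approx Q$ implies: $P\Longrightarrow P'$ implies $Q\Longrightarrow Q'$ with $P'\dot\approx Q'$, and $P\Downarrow_a$ iff $Q\Downarrow_a$. Agents $A,B$ are barbed congruent, $A\cong_\pi B$, if $C[A]\dot\approx C[B]$ for all well-sorted $\pi$-contexts $C$. Encodings ($\lambda$-variables are names). $\mathcal V$: $\mathcal V[\![\lambda x.M]\!]=(p)\,\overline p(y).\,!y(x,q).\mathcal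 V[\![M]\!]\langle q\rangle$; $\mathcal V[\![MN]\!]=(p)(\nu q)\big(\mathcal V[\![M]\!]\langle q\rangle\mid q(y).(\nu r)(\mathcal V[\![N]\!]\langle r\rangle\mid r(w).\overline y\langle w,p\rangle)\big)$; $\mathcal V[\![x]\!]=(p)\,\overline p\langle x\rangle$. $\mathcal V'$ is defined by the same clauses for abstraction and application (with $\mathcal V'$ in place of $\mathcal V$), and $\mathcal V'[\![x]\!]=(p)\,\overline p(y).\,!y(z,q).\overline x\langle z,q\rangle$. *)

theory Defs
  imports Main
begin

section \<open>Polyadic, well-sorted pi-calculus\<close>

text \<open>Names carry their sort: a name is a pair (sort, index), so every sort has
infinitely many names.  A sorting is a function ob assigning to each subject
sort the list of object sorts.\<close>

type_synonym 's name = "'s \<times> nat"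

datatype ('s,'k) proc =
    PNil
  | PIn "'s name" "'s name list" "('s,'k) proc"
  | POut "'s name" "'s name list" "('s,'k) proc"
  | PRes "'s name" "('s,'k) proc"
  | PPar "('s,'k) proc" "('s,'k) proc"
  | PRep "'s name" "'s name list" "('s,'k) proc"
  | PApp "('s,'k) pabs" "'s name list"
  | Hole "'s name list"
and ('s,'k) pabs =
    Abs "'s name list" "('s,'k) proc"
  | Const 'k

type_synonym ('s,'k) defs = "'k \<Rightarrow> ('s name list \<times> ('s,'k) proc)"

primrec fn :: "('s,'k) proc \<Rightarrow> 's name set"
  and fna :: "('s,'k) pabs \<Rightarrow> 's name set" where
  "fn PNil = {}"
| "fn (PIn a bs P) = insert a (fn P - set bs)"
| "fn (POut a bs P) = insert a (set bs \<union> fn P)"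
| "fn (PRes a P) = fn P - {a}"
| "fn (PPar P Q) = fn P \<union> fn Q"
| "fn (PRep a bs P) = insert a (fn P - set bs)"
| "fn (PApp F as) = fna F \<union> set as"
| "fn (Hole as) = set as"
| "fna (Abs xs P) = fn P - set xs"
| "fna (Const k) = {}"

definition fresh_idx :: "'s name set \<Rightarrow> nat" where
  "fresh_idx S = Suc (Max (insert 0 (snd ` S)))"

definition fresh_list :: "nat \<Rightarrow> 's name list \<Rightarrow> 's name list" where
  "fresh_list N bs = map (\<lambda>i. (fst (bs ! i), N + i)) [0..<length bs]"

definition upds :: "('a \<Rightarrow> 'a) \<Rightarrow> 'a list \<Rightarrow> 'a list \<Rightarrow> 'a \<Rightarrow> 'a" where
  "upds \<sigma> xs ys = foldl (\<lambda>f (x,y). f(x := y)) \<sigma> (zip xs ys)"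

primrec subst :: "('s name \<Rightarrow> 's name) \<Rightarrow> ('s,'k) proc \<Rightarrow> ('s,'k) proc"
  and substa :: "('s name \<Rightarrow> 's name) \<Rightarrow> ('s,'k) pabs \<Rightarrow> ('s,'k) pabs" where
  "subst \<sigma> PNil = PNil"
| "subst \<sigma> (PIn a bs P) =
     (let bs' = fresh_list (fresh_idx (\<sigma> ` (fn P - set bs))) bs
      in PIn (\<sigma> a) bs' (subst (upds \<sigma> bs bs') P))"
| "subst \<sigma> (POut a bs P) = POut (\<sigma> a) (map \<sigma> bs) (subst \<sigma> P)"
| "subst \<sigma> (PRes a P) =
     (let a' = (fst a, fresh_idx (\<sigma> ` (fn P - {a})))
      in PRes a' (subst (\<sigma>(a := a')) P))"
| "subst \<sigma> (PPar P Q) = PPar (subst \<sigma> P) (subst \<sigma> Q)"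
| "subst \<sigma> (PRep a bs P) =
     (let bs' = fresh_list (fresh_idx (\<sigma> ` (fn P - set bs))) bs
      in PRep (\<sigma> a) bs' (subst (upds \<sigma> bs bs') P))"
| "subst \<sigma> (PApp F as) = PApp (substa \<sigma> F) (map \<sigma> as)"
| "subst \<sigma> (Hole as) = Hole (map \<sigma> as)"
| "substa \<sigma> (Abs xs P) =
     (let xs' = fresh_list (fresh_idx (\<sigma> ` (fn P - set xs))) xs
      in Abs xs' (subst (upds \<sigma> xs xs') P))"
| "substa \<sigma> (Const k) = Const k"

inductive sc :: "('s,'k) defs \<Rightarrow> ('s,'k) proc \<Rightarrow> ('s,'k) proc \<Rightarrow> bool" for \<Delta> where
  sc_refl: "sc \<Delta> P P"
| sc_sym: "sc \<Delta> P Q \<Longrightarrow> sc \<Delta> Q P"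
| sc_trans: "sc \<Delta> P Q \<Longrightarrow> sc \<Delta> Q R \<Longrightarrow> sc \<Delta> P R"
| sc_in: "sc \<Delta> P Q \<Longrightarrow> sc \<Delta> (PIn a bs P) (PIn a bs Q)"
| sc_out: "sc \<Delta> P Q \<Longrightarrow> sc \<Delta> (POut a bs P) (POut a bs Q)"
| sc_res: "sc \<Delta> P Q \<Longrightarrow> sc \<Delta> (PRes a P) (PRes a Q)"
| sc_par: "sc \<Delta> P Q \<Longrightarrow> sc \<Delta> (PPar P R) (PPar Q R)"
| sc_rep: "sc \<Delta> P Q \<Longrightarrow> sc \<Delta> (PRep a bs P) (PRep a bs Q)"
| sc_app: "sc \<Delta> P Q \<Longrightarrow> sc \<Delta> (PApp (Abs xs P) as) (PApp (Abs xs Q) as)"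
| sc_par_nil: "sc \<Delta> (PPar P PNil) P"
| sc_par_comm: "sc \<Delta> (PPar P Q) (PPar Q P)"
| sc_par_assoc: "sc \<Delta> (PPar (PPar P Q) R) (PPar P (PPar Q R))"
| sc_res_nil: "sc \<Delta> (PRes a PNil) PNil"
| sc_res_comm: "sc \<Delta> (PRes a (PRes b P)) (PRes b (PRes a P))"
| sc_res_par: "a \<notin> fn P \<Longrightarrow> sc \<Delta> (PPar P (PRes a Q)) (PRes a (PPar P Q))"
| sc_rep_unfold: "sc \<Delta> (PRep a bs P) (PPar (PIn a bs P) (PRep a bs P))"
| sc_beta: "length xs = length as \<Longrightarrow> sc \<Delta> (PApp (Abs xs P) as) (subst (upds id xs as) P)"
| sc_const: "\<Delta> k = (xs, P) \<Longrightarrow> length xs = length as \<Longrightarrow>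
             sc \<Delta> (PApp (Const k) as) (subst (upds id xs as) P)"
| sc_alpha_res: "b \<notin> fn (PRes a P) \<Longrightarrow> fst b = fst a \<Longrightarrow>
             sc \<Delta> (PRes a P) (PRes b (subst (id(a := b)) P))"
| sc_alpha_in: "distinct bs' \<Longrightarrow> map fst bs' = map fst bs \<Longrightarrow> set bs' \<inter> fn (PIn a bs P) = {} \<Longrightarrow>
             sc \<Delta> (PIn a bs P) (PIn a bs' (subst (upds id bs bs') P))"
| sc_alpha_rep: "distinct bs' \<Longrightarrow> map fst bs' = map fst bs \<Longrightarrow> set bs' \<inter> fn (PRep a bs P) = {} \<Longrightarrow>
             sc \<Delta> (PRep a bs P) (PRep a bs' (subst (upds id bs bs') P))"

inductive red :: "('s,'k) defs \<Rightarrow> ('s,'k) proc \<Rightarrow> ('s,'k) proc \<Rightarrow> bool" for \<Delta> where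
  red_comm: "length bs = length cs \<Longrightarrow>
     red \<Delta> (PPar (PIn a bs P) (POut a cs Q)) (PPar (subst (upds id bs cs) P) Q)"
| red_par: "red \<Delta> P P' \<Longrightarrow> red \<Delta> (PPar P Q) (PPar P' Q)"
| red_res: "red \<Delta> P P' \<Longrightarrow> red \<Delta> (PRes a P) (PRes a P')"
| red_struct: "sc \<Delta> P P' \<Longrightarrow> red \<Delta> P' Q' \<Longrightarrow> sc \<Delta> Q' Q \<Longrightarrow> red \<Delta> P Q"

primrec obs :: "'s name \<Rightarrow> ('s,'k) proc \<Rightarrow> bool" where
  "obs a PNil = False"
| "obs a (PIn b bs P) = False"
| "obs a (POut b bs P) = (a = b)"
| "obs a (PRes b P) = (a \<noteq> b \<and> obs a P)"
| "obs a (PPar P Q) = (obs a P \<or> obs a Q)"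
| "obs a (PRep b bs P) = False"
| "obs a (PApp F as) = False"
| "obs a (Hole as) = False"

definition barb :: "('s,'k) defs \<Rightarrow> ('s,'k) proc \<Rightarrow> 's name \<Rightarrow> bool" where
  "barb \<Delta> P a \<longleftrightarrow> (\<exists>P'. sc \<Delta> P P' \<and> obs a P')"

definition wbarb :: "('s,'k) defs \<Rightarrow> ('s,'k) proc \<Rightarrow> 's name \<Rightarrow> bool" where
  "wbarb \<Delta> P a \<longleftrightarrow> (\<exists>P'. (red \<Delta>)\<^sup>*\<^sup>* P P' \<and> barb \<Delta> P' a)"

definition is_bbisim :: "('s,'k) defs \<Rightarrow> (('s,'k) proc \<Rightarrow> ('s,'k) proc \<Rightarrow> bool) \<Rightarrow> bool" where
  "is_bbisim \<Delta> R \<longleftrightarrow> symp R \<and>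
     (\<forall>P Q. R P Q \<longrightarrow>
        (\<forall>P'. (red \<Delta>)\<^sup>*\<^sup>* P P' \<longrightarrow> (\<exists>Q'. (red \<Delta>)\<^sup>*\<^sup>* Q Q' \<and> R P' Q')) \<and>
        (\<forall>a. wbarb \<Delta> P a \<longleftrightarrow> wbarb \<Delta> Q a))"

definition bbisimilar :: "('s,'k) defs \<Rightarrow> ('s,'k) proc \<Rightarrow> ('s,'k) proc \<Rightarrow> bool" where
  "bbisimilar \<Delta> P Q \<longleftrightarrow> (\<exists>R. is_bbisim \<Delta> R \<and> R P Q)"

primrec asort :: "('s,'k) defs \<Rightarrow> ('s,'k) pabs \<Rightarrow> 's list" where
  "asort \<Delta> (Abs xs P) = map fst xs"
| "asort \<Delta> (Const k) = map fst (fst (\<Delta> k))"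

text \<open>Well-sortedness w.r.t. sorting ob; hs is the sort of the abstraction the
hole (if any) is to be filled with.\<close>
primrec ws :: "('s \<Rightarrow> 's list) \<Rightarrow> ('s,'k) defs \<Rightarrow> 's list \<Rightarrow> ('s,'k) proc \<Rightarrow> bool"
  and wsa :: "('s \<Rightarrow> 's list) \<Rightarrow> ('s,'k) defs \<Rightarrow> 's list \<Rightarrow> ('s,'k) pabs \<Rightarrow> bool" where
  "ws ob \<Delta> hs PNil = True"
| "ws ob \<Delta> hs (PIn a bs P) = (map fst bs = ob (fst a) \<and> distinct bs \<and> ws ob \<Delta> hs P)"
| "ws ob \<Delta> hs (POut a bs P) = (map fst bs = ob (fst a) \<and> ws ob \<Delta> hs P)"
| "ws ob \<Delta> hs (PRes a P) = ws ob \<Delta> hs P"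
| "ws ob \<Delta> hs (PPar P Q) = (ws ob \<Delta> hs P \<and> ws ob \<Delta> hs Q)"
| "ws ob \<Delta> hs (PRep a bs P) = (map fst bs = ob (fst a) \<and> distinct bs \<and> ws ob \<Delta> hs P)"
| "ws ob \<Delta> hs (PApp F as) = (wsa ob \<Delta> hs F \<and> map fst as = asort \<Delta> F)"
| "ws ob \<Delta> hs (Hole as) = (map fst as = hs)"
| "wsa ob \<Delta> hs (Abs xs P) = (distinct xs \<and> ws ob \<Delta> hs P)"
| "wsa ob \<Delta> hs (Const k) = True"

primrec nholes :: "('s,'k) proc \<Rightarrow> nat" and nholesa :: "('s,'k) pabs \<Rightarrow> nat" where
  "nholes PNil = 0"
| "nholes (PIn a bs P) = nholes P"
| "nholes (POut a bs P) = nholes P"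
| "nholes (PRes a P) = nholes P"
| "nholes (PPar P Q) = nholes P + nholes Q"
| "nholes (PRep a bs P) = nholes P"
| "nholes (PApp F as) = nholesa F"
| "nholes (Hole as) = 1"
| "nholesa (Abs xs P) = nholes P"
| "nholesa (Const k) = 0"

text \<open>Filling the hole of a context with an abstraction (names may be captured).\<close>
primrec fill :: "('s,'k) proc \<Rightarrow> ('s,'k) pabs \<Rightarrow> ('s,'k) proc"
  and filla :: "('s,'k) pabs \<Rightarrow> ('s,'k) pabs \<Rightarrow> ('s,'k) pabs" where
  "fill PNil A = PNil"
| "fill (PIn a bs P) A = PIn a bs (fill P A)"
| "fill (POut a bs P) A = POut a bs (fill P A)"
| "fill (PRes a P) A = PRes a (fill P A)"
| "fill (PPar P Q) A = PPar (fill P A) (fill Q A)"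
| "fill (PRep a bs P) A = PRep a bs (fill P A)"
| "fill (PApp F as) A = PApp (filla F A) as"
| "fill (Hole as) A = PApp A as"
| "filla (Abs xs P) A = Abs xs (fill P A)"
| "filla (Const k) A = Const k"

definition wf_defs :: "('s \<Rightarrow> 's list) \<Rightarrow> ('s,'k) defs \<Rightarrow> bool" where
  "wf_defs ob \<Delta> \<longleftrightarrow> (\<forall>k. distinct (fst (\<Delta> k)) \<and> ws ob \<Delta> [] (snd (\<Delta> k)) \<and>
      nholes (snd (\<Delta> k)) = 0 \<and> fn (snd (\<Delta> k)) \<subseteq> set (fst (\<Delta> k)))"

definition bcong :: "('s \<Rightarrow> 's list) \<Rightarrow> ('s,'k) defs \<Rightarrow> ('s,'k) pabs \<Rightarrow> ('s,'k) pabs \<Rightarrow> bool" where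
  "bcong ob \<Delta> A B \<longleftrightarrow>
     (\<forall>C. ws ob \<Delta> (asort \<Delta> A) C \<and> nholes C = 1 \<longrightarrow> bbisimilar \<Delta> (fill C A) (fill C B))"

section \<open>Lambda-calculus and Milner's call-by-value encodings\<close>

datatype lterm = Var nat | Lam nat lterm | LApp lterm lterm

fun is_value :: "lterm \<Rightarrow> bool" where
  "is_value (Var x) = True"
| "is_value (Lam x M) = True"
| "is_value (LApp M N) = False"

text \<open>v is the sort of values / lambda-variables, c the sort of continuation names.
Lambda-variable n is the pi-name (v, 2n); the auxiliary names of the encodings
use other indices, hence never capture lambda-variables.\<close>
definition lvar :: "'s \<Rightarrow> nat \<Rightarrow> 's name" where "lvar v n = (v, 2 * n)"

primrec encV :: "'s \<Rightarrow> 's \<Rightarrow> lterm \<Rightarrow> ('s,'k) pabs" where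
  "encV v c (Var n) = Abs [(c,0)] (POut (c,0) [lvar v n] PNil)"
| "encV v c (Lam n M) = Abs [(c,0)]
     (PRes (v,1) (POut (c,0) [(v,1)] (PRep (v,1) [lvar v n, (c,1)] (PApp (encV v c M) [(c,1)]))))"
| "encV v c (LApp M N) = Abs [(c,0)]
     (PRes (c,1) (PPar (PApp (encV v c M) [(c,1)])
        (PIn (c,1) [(v,1)] (PRes (c,2) (PPar (PApp (encV v c N) [(c,2)])
            (PIn (c,2) [(v,3)] (POut (v,1) [(v,3), (c,0)] PNil)))))))"

primrec encV' :: "'s \<Rightarrow> 's \<Rightarrow> lterm \<Rightarrow> ('s,'k) pabs" where
  "encV' v c (Var n) = Abs [(c,0)]
     (PRes (v,1) (POut (c,0) [(v,1)] (PRep (v,1) [(v,5), (c,1)] (POut (lvar v n) [(v,5), (c,1)] PNil))))"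
| "encV' v c (Lam n M) = Abs [(c,0)]
     (PRes (v,1) (POut (c,0) [(v,1)] (PRep (v,1) [lvar v n, (c,1)] (PApp (encV' v c M) [(c,1)]))))"
| "encV' v c (LApp M N) = Abs [(c,0)]
     (PRes (c,1) (PPar (PApp (encV' v c M) [(c,1)])
        (PIn (c,1) [(v,1)] (PRes (c,2) (PPar (PApp (encV' v c N) [(c,2)])
            (PIn (c,2) [(v,3)] (POut (v,1) [(v,3), (c,0)] PNil)))))))"

end

theory Submission
  imports Defs
begin


definition updg :: "('a \<Rightarrow> 'b) \<Rightarrow> 'a list \<Rightarrow> 'b list \<Rightarrow> 'a \<Rightarrow> 'b" where
  "updg f xs ys = foldl (\<lambda>f (x,y). f(x := y)) f (zip xs ys)"

lemma upds_updg[simp]: "upds = updg"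
  by (intro ext) (simp add: upds_def updg_def)

lemma updg_Nil[simp]: "updg f [] ys = f" by (simp add: updg_def)
lemma updg_Nil2[simp]: "updg f xs [] = f" by (simp add: updg_def)
lemma updg_Cons[simp]: "updg f (x#xs) (y#ys) = updg (f(x:=y)) xs ys" by (simp add: updg_def)

lemma updg_notin: "z \<notin> set xs \<Longrightarrow> updg f xs ys z = f z"
proof (induction xs arbitrary: f ys)
  case (Cons x xs) then show ?case by (cases ys) auto
qed auto

fun lastidx :: "'a list \<Rightarrow> 'a \<Rightarrow> nat" where
  "lastidx [] z = 0"
| "lastidx (x#xs) z = (if z \<in> set xs then Suc (lastidx xs z) else 0)"

lemma lastidx_lt: "z \<in> set xs \<Longrightarrow> lastidx xs z < length xs"
  by (induction xs) auto
lemma lastidx_nth: "z \<in> set xs \<Longrightarrow> xs ! lastidx xs z = z"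
  by (induction xs) auto
lemma lastidx_max: "i < length xs \<Longrightarrow> xs ! i = z \<Longrightarrow> i \<le> lastidx xs z"
proof (induction xs arbitrary: i)
  case (Cons x xs) then show ?case
    by (cases i) (auto)
qed auto

lemma updg_in: "length xs = length ys \<Longrightarrow> z \<in> set xs \<Longrightarrow> updg f xs ys z = ys ! lastidx xs z"
proof (induction xs arbitrary: f ys)
  case (Cons x xs) then show ?case
    by (cases ys) (auto simp: updg_notin)
qed auto

lemma updg_in_set: "length xs = length ys \<Longrightarrow> z \<in> set xs \<Longrightarrow> updg f xs ys z \<in> set ys"
  by (metis updg_in lastidx_lt nth_mem)

definition cmpt :: "'a list \<Rightarrow> 'b list \<Rightarrow> bool" where
  "cmpt bs bs' \<longleftrightarrow> (\<forall>i<length bs. \<forall>j<length bs. bs'!i = bs'!j \<longrightarrow> bs!i = bs!j)"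

lemma cmpt_distinct: "length bs' = length bs \<Longrightarrow> distinct bs' \<Longrightarrow> cmpt bs bs'"
  by (auto simp: cmpt_def nth_eq_iff_index_eq)
lemma cmpt_refl: "cmpt bs bs" by (simp add: cmpt_def)

lemma L1:
  assumes len: "length bs' = length bs" and cp: "cmpt bs bs'" and y: "y \<in> set bs"
    and lz: "length zs = length bs"
  shows "updg g bs' zs (updg c bs bs' y) = updg h bs zs y"
proof -
  define j where "j = lastidx bs y"
  have j1: "j < length bs" unfolding j_def using y by (rule lastidx_lt)
  have j2: "bs ! j = y" unfolding j_def using y by (rule lastidx_nth)
  have e1: "updg c bs bs' y = bs' ! j" unfolding j_def using len y by (simp add: updg_in)
  have e2: "updg h bs zs y = zs ! j" unfolding j_def using lz y by (simp add: updg_in)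
  have inb: "bs' ! j \<in> set bs'" using j1 len by simp
  define j' where "j' = lastidx bs' (bs' ! j)"
  have j'1: "j' < length bs'" unfolding j'_def using inb by (rule lastidx_lt)
  have j'2: "bs' ! j' = bs' ! j" unfolding j'_def using inb by (rule lastidx_nth)
  have "bs ! j' = bs ! j" using cp j1 j'1 j'2 len unfolding cmpt_def by metis
  hence "j' \<le> j" unfolding j_def using lastidx_max[of j' bs y] j'1 len j2 by (simp add: j_def)
  moreover have "j \<le> j'" unfolding j'_def using lastidx_max[of j bs' "bs' ! j"] j1 len by simp
  ultimately have jj: "j' = j" by simp
  have "updg g bs' zs (bs' ! j) = zs ! j'" unfolding j'_def using inb lz len by (simp add: updg_in)
  thus ?thesis using e1 e2 jj by simp
qed

lemma updg_same: "z \<in> set xs \<Longrightarrow> updg f xs xs z = z"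
  by (simp add: updg_in lastidx_nth)

lemma fresh_idx_gt: "finite S \<Longrightarrow> y \<in> S \<Longrightarrow> snd y < fresh_idx S"
  unfolding fresh_idx_def by (simp add: le_imp_less_Suc)

lemma fresh_idx_pos[simp]: "fresh_idx S \<noteq> 0"
  by (simp add: fresh_idx_def)

lemma fresh_list_length[simp]: "length (fresh_list N bs) = length bs"
  by (simp add: fresh_list_def)
lemma fresh_list_fst[simp]: "map fst (fresh_list N bs) = map fst bs"
  by (rule nth_equalityI) (auto simp: fresh_list_def)
lemma fresh_list_distinct: "distinct (fresh_list N bs)"
  by (auto simp: fresh_list_def distinct_map inj_on_def)
lemma fresh_list_ge: "z \<in> set (fresh_list N bs) \<Longrightarrow> N \<le> snd z"
  by (auto simp: fresh_list_def)

lemma fresh_list_disj: "finite S \<Longrightarrow> set (fresh_list (fresh_idx S) bs) \<inter> S = {}"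
  using fresh_list_ge fresh_idx_gt by fastforce

lemma fresh_list_disj': "finite S \<Longrightarrow> z \<in> S \<Longrightarrow> z \<notin> set (fresh_list (fresh_idx S) bs)"
  using fresh_list_disj by blast

lemma finite_fn: "finite (fn (P::('s,'k) proc))" "finite (fna (F::('s,'k) pabs))"
  by (induction P and F) auto

lemma updg_image:
  assumes "length bs' = length bs" "set bs' \<inter> \<sigma> ` (A - set bs) = {}"
  shows "updg \<sigma> bs bs' ` A - set bs' = \<sigma> ` (A - set bs)"
proof
  show "updg \<sigma> bs bs' ` A - set bs' \<subseteq> \<sigma> ` (A - set bs)"
  proof
    fix z assume "z \<in> updg \<sigma> bs bs' ` A - set bs'"
    then obtain y where y: "y \<in> A" "z = updg \<sigma> bs bs' y" "z \<notin> set bs'" by auto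
    show "z \<in> \<sigma> ` (A - set bs)"
    proof (cases "y \<in> set bs")
      case True then show ?thesis using y assms updg_in_set by metis
    next
      case False then show ?thesis using y by (simp add: updg_notin)
    qed
  qed
next
  show "\<sigma> ` (A - set bs) \<subseteq> updg \<sigma> bs bs' ` A - set bs'"
    using assms by (auto simp: updg_notin intro!: image_eqI)
qed

lemma fn_subst: "fn (subst \<sigma> (P::('s,'k) proc)) = \<sigma> ` fn P" "fna (substa \<sigma> (F::('s,'k) pabs)) = \<sigma> ` fna F"
proof (induction P and F arbitrary: \<sigma> and \<sigma>)
  case (PIn a bs P)
  let ?bs' = "fresh_list (fresh_idx (\<sigma> ` (fn P - set bs))) bs"
  have d: "set ?bs' \<inter> \<sigma> ` (fn P - set bs) = {}"
    by (rule fresh_list_disj) (simp add: finite_fn)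
  show ?case using PIn updg_image[OF _ d] by (simp add: Let_def image_insert)
next
  case (PRep a bs P)
  let ?bs' = "fresh_list (fresh_idx (\<sigma> ` (fn P - set bs))) bs"
  have d: "set ?bs' \<inter> \<sigma> ` (fn P - set bs) = {}"
    by (rule fresh_list_disj) (simp add: finite_fn)
  show ?case using PRep updg_image[OF _ d] by (simp add: Let_def image_insert)
next
  case (Abs xs P)
  let ?bs' = "fresh_list (fresh_idx (\<sigma> ` (fn P - set xs))) xs"
  have d: "set ?bs' \<inter> \<sigma> ` (fn P - set xs) = {}"
    by (rule fresh_list_disj) (simp add: finite_fn)
  show ?case using Abs updg_image[OF _ d] by (simp add: Let_def)
next
  case (PRes a P)
  let ?a' = "(fst a, fresh_idx (\<sigma> ` (fn P - {a})))"
  have d: "?a' \<notin> \<sigma> ` (fn P - {a})"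
    using fresh_idx_gt[of "\<sigma> ` (fn P - {a})"] finite_fn by fastforce
  have "(\<sigma>(a := ?a')) ` fn P - {?a'} = \<sigma> ` (fn P - {a})"
    using d by auto
  then show ?case using PRes by (simp add: Let_def)
qed (auto simp: image_Un)


definition substs :: "('s name \<Rightarrow> 's name) list \<Rightarrow> ('s,'k) proc \<Rightarrow> ('s,'k) proc" where
  "substs ss P = foldr subst ss P"
definition comp :: "('a \<Rightarrow> 'a) list \<Rightarrow> 'a \<Rightarrow> 'a" where
  "comp ss = foldr (\<lambda>s f. s \<circ> f) ss id"

lemma substs_simps[simp]: "substs [] P = P" "substs (s#ss) P = subst s (substs ss P)"
  by (simp_all add: substs_def)
lemma comp_simps[simp]: "comp [] = id" "comp (s#ss) = s \<circ> comp ss"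
  by (simp_all add: comp_def)

lemma fn_substs: "fn (substs ss P) = comp ss ` fn P"
  by (induction ss) (auto simp: fn_subst image_comp)

fun tag :: "('s,'k) proc \<Rightarrow> nat" where
  "tag PNil = 0" | "tag (PIn a bs P) = 1" | "tag (POut a bs P) = 2" | "tag (PRes a P) = 3"
| "tag (PPar P Q) = 4" | "tag (PRep a bs P) = 5" | "tag (PApp (Abs xs P) as) = 6"
| "tag (PApp (Const k) as) = 7" | "tag (Hole as) = 8"

lemma tag_subst[simp]: "tag (subst \<sigma> P) = tag P"
proof (cases P)
  case (PApp F as) then show ?thesis by (cases F) (auto simp: Let_def)
qed (auto simp: Let_def)

lemma tag_substs[simp]: "tag (substs ss P) = tag P"
  by (induction ss) auto

lemma ch_out: "substs ss (POut a bs P) = POut (comp ss a) (map (comp ss) bs) (substs ss P)"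
  by (induction ss) auto
lemma ch_par: "substs ss (PPar P Q) = PPar (substs ss P) (substs ss Q)"
  by (induction ss) auto
lemma ch_nil: "substs ss PNil = PNil"
  by (induction ss) auto
lemma ch_const: "substs ss (PApp (Const k) as) = PApp (Const k) (map (comp ss) as)"
  by (induction ss) auto

definition bprops where
  "bprops ss P bs bs' ss' \<longleftrightarrow> length bs' = length bs \<and> cmpt bs bs' \<and>
     (\<forall>y\<in>fn P. comp ss' y = updg (comp ss) bs bs' y) \<and> set bs' \<inter> comp ss ` (fn P - set bs) = {}"

lemma updg_id_same: "updg id bs bs y = y"
  by (metis updg_same updg_notin id_apply)

lemma bprops_nil: "bprops [] P bs bs []"
  by (auto simp: bprops_def cmpt_refl updg_id_same)

lemma bprops_step:
  assumes bp: "bprops ss P bs bs1 ss1"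
    and bs2: "bs2 = fresh_list (fresh_idx (s ` (fn (substs ss1 P) - set bs1))) bs1"
  shows "bprops (s#ss) P bs bs2 (updg s bs1 bs2 # ss1)"
proof -
  have l1: "length bs1 = length bs" and c1: "cmpt bs bs1"
    and e1: "\<forall>y\<in>fn P. comp ss1 y = updg (comp ss) bs bs1 y"
    and d1: "set bs1 \<inter> comp ss ` (fn P - set bs) = {}" using bp by (auto simp: bprops_def)
  have l2: "length bs2 = length bs" using bs2 l1 by simp
  have c2: "cmpt bs bs2" using bs2 l1 by (simp add: cmpt_distinct fresh_list_distinct)
  have e2: "comp (updg s bs1 bs2 # ss1) y = updg (comp (s#ss)) bs bs2 y" if y: "y \<in> fn P" for y
  proof (cases "y \<in> set bs")
    case True
    have "comp (updg s bs1 bs2 # ss1) y = updg s bs1 bs2 (updg (comp ss) bs bs1 y)" using e1 y by simp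
    also have "\<dots> = updg (comp (s#ss)) bs bs2 y" by (rule L1[OF l1 c1 True l2])
    finally show ?thesis .
  next
    case False
    have a: "comp ss1 y = comp ss y" using e1 y False by (simp add: updg_notin)
    have b: "comp ss y \<notin> set bs1" using d1 y False by auto
    show ?thesis using a b False by (simp add: updg_notin)
  qed
  have d2: "set bs2 \<inter> comp (s#ss) ` (fn P - set bs) = {}"
  proof -
    have "comp (s#ss) ` (fn P - set bs) \<subseteq> s ` (fn (substs ss1 P) - set bs1)"
    proof
      fix z assume "z \<in> comp (s#ss) ` (fn P - set bs)"
      then obtain y where y: "y \<in> fn P" "y \<notin> set bs" "z = s (comp ss y)" by auto
      have a: "comp ss1 y = comp ss y" using e1 y by (simp add: updg_notin)
      have b: "comp ss y \<notin> set bs1" using d1 y by auto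
      have "comp ss y \<in> fn (substs ss1 P)" using a y by (simp add: fn_substs) (metis image_eqI)
      thus "z \<in> s ` (fn (substs ss1 P) - set bs1)" using y b by auto
    qed
    moreover have "set bs2 \<inter> s ` (fn (substs ss1 P) - set bs1) = {}"
      unfolding bs2 by (rule fresh_list_disj) (simp add: finite_fn)
    ultimately show ?thesis by blast
  qed
  show ?thesis unfolding bprops_def using l2 c2 e2 d2 by blast
qed

lemma subst_res_list:
  "subst \<sigma> (PRes a P) = (let bs' = fresh_list (fresh_idx (\<sigma> ` (fn P - set [a]))) [a]
     in PRes (hd bs') (subst (updg \<sigma> [a] bs') P))"
  by (simp add: Let_def fresh_list_def)

lemma ch_in: "\<exists>bs' ss'. substs ss (PIn a bs P) = PIn (comp ss a) bs' (substs ss' P) \<and> bprops ss P bs bs' ss'"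
proof (induction ss)
  case Nil show ?case by (rule exI[of _ bs], rule exI[of _ "[]"]) (simp add: bprops_nil)
next
  case (Cons s ss)
  then obtain bs1 ss1 where h: "substs ss (PIn a bs P) = PIn (comp ss a) bs1 (substs ss1 P)"
    "bprops ss P bs bs1 ss1" by blast
  define bs2 where "bs2 = fresh_list (fresh_idx (s ` (fn (substs ss1 P) - set bs1))) bs1"
  have "substs (s#ss) (PIn a bs P) = PIn (comp (s#ss) a) bs2 (substs (updg s bs1 bs2 # ss1) P)"
    using h(1) by (simp add: bs2_def Let_def)
  then show ?case using bprops_step[OF h(2) bs2_def] by blast
qed

lemma ch_rep: "\<exists>bs' ss'. substs ss (PRep a bs P) = PRep (comp ss a) bs' (substs ss' P) \<and> bprops ss P bs bs' ss'"
proof (induction ss)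
  case Nil show ?case by (rule exI[of _ bs], rule exI[of _ "[]"]) (simp add: bprops_nil)
next
  case (Cons s ss)
  then obtain bs1 ss1 where h: "substs ss (PRep a bs P) = PRep (comp ss a) bs1 (substs ss1 P)"
    "bprops ss P bs bs1 ss1" by blast
  define bs2 where "bs2 = fresh_list (fresh_idx (s ` (fn (substs ss1 P) - set bs1))) bs1"
  have "substs (s#ss) (PRep a bs P) = PRep (comp (s#ss) a) bs2 (substs (updg s bs1 bs2 # ss1) P)"
    using h(1) by (simp add: bs2_def Let_def)
  then show ?case using bprops_step[OF h(2) bs2_def] by blast
qed

lemma ch_abs: "\<exists>bs' ss'. substs ss (PApp (Abs bs P) as) = PApp (Abs bs' (substs ss' P)) (map (comp ss) as) \<and> bprops ss P bs bs' ss'"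
proof (induction ss)
  case Nil show ?case by (rule exI[of _ bs], rule exI[of _ "[]"]) (simp add: bprops_nil)
next
  case (Cons s ss)
  then obtain bs1 ss1 where h: "substs ss (PApp (Abs bs P) as) = PApp (Abs bs1 (substs ss1 P)) (map (comp ss) as)"
    "bprops ss P bs bs1 ss1" by blast
  define bs2 where "bs2 = fresh_list (fresh_idx (s ` (fn (substs ss1 P) - set bs1))) bs1"
  have "substs (s#ss) (PApp (Abs bs P) as) = PApp (Abs bs2 (substs (updg s bs1 bs2 # ss1) P)) (map (comp (s#ss)) as)"
    using h(1) by (simp add: bs2_def Let_def)
  then show ?case using bprops_step[OF h(2) bs2_def] by blast
qed

lemma ch_res: "\<exists>a' ss'. substs ss (PRes a P) = PRes a' (substs ss' P) \<and> bprops ss P [a] [a'] ss'"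
proof (induction ss)
  case Nil show ?case by (rule exI[of _ a], rule exI[of _ "[]"]) (simp add: bprops_nil)
next
  case (Cons s ss)
  then obtain a1 ss1 where h: "substs ss (PRes a P) = PRes a1 (substs ss1 P)"
    "bprops ss P [a] [a1] ss1" by blast
  define bs2 where "bs2 = fresh_list (fresh_idx (s ` (fn (substs ss1 P) - set [a1]))) [a1]"
  have l: "bs2 = [hd bs2]" unfolding bs2_def by (simp add: fresh_list_def)
  have "substs (s#ss) (PRes a P) = PRes (hd bs2) (substs (updg s [a1] bs2 # ss1) P)"
    using h(1) by (simp only: substs_simps subst_res_list Let_def bs2_def)
  moreover have "bprops (s#ss) P [a] [hd bs2] (updg s [a1] bs2 # ss1)"
    using bprops_step[OF h(2) bs2_def] l by simp
  ultimately show ?case by (intro exI[of _ "hd bs2"] exI[of _ "updg s [a1] bs2 # ss1"]) simp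
qed


datatype ty = TD | TN | TCh "ty list"

definition sub :: "ty \<Rightarrow> ty \<Rightarrow> bool" where "sub S T \<longleftrightarrow> S = T \<or> T = TN"

lemma sub_refl[simp]: "sub S S" by (simp add: sub_def)
lemma sub_Ch[simp]: "sub S (TCh ts) \<longleftrightarrow> S = TCh ts" by (auto simp: sub_def)
lemma sub_D[simp]: "sub S TD \<longleftrightarrow> S = TD" by (auto simp: sub_def)
lemma sub_trans: "sub A B \<Longrightarrow> sub B C \<Longrightarrow> sub A C" by (auto simp: sub_def)

inductive typed :: "('s,'k) defs \<Rightarrow> ('s name \<Rightarrow> ty) \<Rightarrow> ('s,'k) proc \<Rightarrow> bool" for \<Delta> where
  t_nil: "typed \<Delta> \<Gamma> PNil"
| t_in_d: "\<Gamma> a = TD \<Longrightarrow> typed \<Delta> \<Gamma> (PIn a bs P)"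
| t_in: "\<Gamma> a = TCh ts \<Longrightarrow> length bs = length ts \<Longrightarrow> typed \<Delta> (updg \<Gamma> bs ts) P \<Longrightarrow> typed \<Delta> \<Gamma> (PIn a bs P)"
| t_out: "\<Gamma> a = TCh ts \<Longrightarrow> list_all2 (\<lambda>b t. sub (\<Gamma> b) t) bs ts \<Longrightarrow> typed \<Delta> \<Gamma> P \<Longrightarrow> typed \<Delta> \<Gamma> (POut a bs P)"
| t_res: "typed \<Delta> (\<Gamma>(a:=T)) P \<Longrightarrow> typed \<Delta> \<Gamma> (PRes a P)"
| t_par: "typed \<Delta> \<Gamma> P \<Longrightarrow> typed \<Delta> \<Gamma> Q \<Longrightarrow> typed \<Delta> \<Gamma> (PPar P Q)"
| t_rep_d: "\<Gamma> a = TD \<Longrightarrow> typed \<Delta> \<Gamma> (PRep a bs P)"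
| t_rep: "\<Gamma> a = TCh ts \<Longrightarrow> length bs = length ts \<Longrightarrow> typed \<Delta> (updg \<Gamma> bs ts) P \<Longrightarrow> typed \<Delta> \<Gamma> (PRep a bs P)"
| t_abs: "length xs = length as \<Longrightarrow> typed \<Delta> \<Gamma> (subst (updg id xs as) P) \<Longrightarrow> typed \<Delta> \<Gamma> (PApp (Abs xs P) as)"
| t_const: "\<Delta> k = (xs, P) \<Longrightarrow> length xs = length as \<Longrightarrow> typed \<Delta> \<Gamma> (subst (updg id xs as) P) \<Longrightarrow> typed \<Delta> \<Gamma> (PApp (Const k) as)"

inductive_cases tc_nil: "typed \<Delta> \<Gamma> PNil"
inductive_cases tc_in: "typed \<Delta> \<Gamma> (PIn a bs P)"
inductive_cases tc_out: "typed \<Delta> \<Gamma> (POut a bs P)"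
inductive_cases tc_res: "typed \<Delta> \<Gamma> (PRes a P)"
inductive_cases tc_par: "typed \<Delta> \<Gamma> (PPar P Q)"
inductive_cases tc_rep: "typed \<Delta> \<Gamma> (PRep a bs P)"
inductive_cases tc_abs: "typed \<Delta> \<Gamma> (PApp (Abs xs P) as)"
inductive_cases tc_const: "typed \<Delta> \<Gamma> (PApp (Const k) as)"
inductive_cases tc_hole: "typed \<Delta> \<Gamma> (Hole as)"

lemma bind_agree:
  assumes A: "bprops ssA P bs bsA ssA'" and B: "bprops ssB P bs bsB ssB'"
    and y: "y \<in> fn P" and lt: "length ts = length bs"
    and ag: "y \<notin> set bs \<Longrightarrow> sub (\<Gamma>' (comp ssB y)) (\<Gamma> (comp ssA y))"
  shows "sub (updg \<Gamma>' bsB ts (comp ssB' y)) (updg \<Gamma> bsA ts (comp ssA' y))"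
proof (cases "y \<in> set bs")
  case True
  have "updg \<Gamma> bsA ts (comp ssA' y) = updg \<Gamma> bsA ts (updg (comp ssA) bs bsA y)"
    using A y by (simp add: bprops_def)
  also have "\<dots> = updg \<Gamma> bs ts y" using A True lt by (intro L1) (auto simp: bprops_def)
  finally have 1: "updg \<Gamma> bsA ts (comp ssA' y) = updg \<Gamma> bs ts y" .
  have "updg \<Gamma>' bsB ts (comp ssB' y) = updg \<Gamma>' bsB ts (updg (comp ssB) bs bsB y)"
    using B y by (simp add: bprops_def)
  also have "\<dots> = updg \<Gamma> bs ts y" using B True lt by (intro L1) (auto simp: bprops_def)
  finally show ?thesis using 1 by simp
next
  case False
  have a1: "comp ssA' y = comp ssA y" using A y False by (simp add: bprops_def updg_notin)
  have a2: "comp ssA y \<notin> set bsA" using A y False by (auto simp: bprops_def)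
  have b1: "comp ssB' y = comp ssB y" using B y False by (simp add: bprops_def updg_notin)
  have b2: "comp ssB y \<notin> set bsB" using B y False by (auto simp: bprops_def)
  show ?thesis using a1 a2 b1 b2 ag False by (simp add: updg_notin)
qed

lemma abs_agree:
  assumes A: "bprops ssA P xs xsA ssA'" and B: "bprops ssB P xs xsB ssB'"
    and y: "y \<in> fn P" and lt: "length as = length xs"
    and ag: "\<And>z. z \<in> set as \<or> (z \<in> fn P \<and> z \<notin> set xs) \<Longrightarrow> sub (\<Gamma>' (comp ssB z)) (\<Gamma> (comp ssA z))"
  shows "sub (\<Gamma>' (updg id xsB (map (comp ssB) as) (comp ssB' y))) (\<Gamma> (updg id xsA (map (comp ssA) as) (comp ssA' y)))"
proof (cases "y \<in> set xs")
  case True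
  define j where "j = lastidx xs y"
  have j: "j < length xs" unfolding j_def using True by (rule lastidx_lt)
  have "updg id xsA (map (comp ssA) as) (comp ssA' y) = updg id xsA (map (comp ssA) as) (updg (comp ssA) xs xsA y)"
    using A y by (simp add: bprops_def)
  also have "\<dots> = updg id xs (map (comp ssA) as) y" using A True lt by (intro L1) (auto simp: bprops_def)
  also have "\<dots> = comp ssA (as ! j)" using True lt j by (simp add: updg_in j_def)
  finally have 1: "updg id xsA (map (comp ssA) as) (comp ssA' y) = comp ssA (as ! j)" .
  have "updg id xsB (map (comp ssB) as) (comp ssB' y) = updg id xsB (map (comp ssB) as) (updg (comp ssB) xs xsB y)"
    using B y by (simp add: bprops_def)
  also have "\<dots> = updg id xs (map (comp ssB) as) y" using B True lt by (intro L1) (auto simp: bprops_def)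
  also have "\<dots> = comp ssB (as ! j)" using True lt j by (simp add: updg_in j_def)
  finally have 2: "updg id xsB (map (comp ssB) as) (comp ssB' y) = comp ssB (as ! j)" .
  have "as ! j \<in> set as" using j lt by simp
  then show ?thesis using 1 2 ag by simp
next
  case False
  have a1: "comp ssA' y = comp ssA y" using A y False by (simp add: bprops_def updg_notin)
  have a2: "comp ssA y \<notin> set xsA" using A y False by (auto simp: bprops_def)
  have b1: "comp ssB' y = comp ssB y" using B y False by (simp add: bprops_def updg_notin)
  have b2: "comp ssB y \<notin> set xsB" using B y False by (auto simp: bprops_def)
  show ?thesis using a1 a2 b1 b2 ag False y by (simp add: updg_notin)
qed

lemma SL:
  assumes "typed \<Delta> \<Gamma> Q" and wf: "wf_defs ob \<Delta>"
  shows "Q = substs ss P \<Longrightarrow> (\<forall>y\<in>fn P. sub (\<Gamma>' (comp ts y)) (\<Gamma> (comp ss y))) \<Longrightarrow> typed \<Delta> \<Gamma>' (substs ts P)"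
  using assms(1)
proof (induction arbitrary: ss P ts \<Gamma>' rule: typed.induct)
  case (t_nil \<Gamma>)
  then have "tag P = 0" by (metis tag.simps(1) tag_substs)
  then have "P = PNil" by (cases P rule: tag.cases) auto
  then show ?case by (simp add: ch_nil typed.t_nil)
next
  case (t_in_d \<Gamma> a bs Q)
  then have "tag P = 1" by (metis tag.simps(2) tag_substs)
  then obtain a0 bs0 P0 where P: "P = PIn a0 bs0 P0" by (cases P rule: tag.cases) auto
  obtain bsA ssA where A: "substs ss P = PIn (comp ss a0) bsA (substs ssA P0)" using ch_in P by blast
  obtain bsB ssB where B: "substs ts P = PIn (comp ts a0) bsB (substs ssB P0)" using ch_in P by blast
  have "\<Gamma> (comp ss a0) = TD" using t_in_d A by simp
  then have "\<Gamma>' (comp ts a0) = TD" using t_in_d(3) P by auto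
  then show ?case using B by (simp add: typed.t_in_d)
next
  case (t_in \<Gamma> a tys bs Q)
  then have "tag P = 1" by (metis tag.simps(2) tag_substs)
  then obtain a0 bs0 P0 where P: "P = PIn a0 bs0 P0" by (cases P rule: tag.cases) auto
  obtain bsA ssA where A: "substs ss P = PIn (comp ss a0) bsA (substs ssA P0)" "bprops ss P0 bs0 bsA ssA" using ch_in P by blast
  obtain bsB ssB where B: "substs ts P = PIn (comp ts a0) bsB (substs ssB P0)" "bprops ts P0 bs0 bsB ssB" using ch_in P by blast
  have e: "a = comp ss a0" "bs = bsA" "Q = substs ssA P0" using t_in.prems(1) A by auto
  have "\<Gamma>' (comp ts a0) = TCh tys" using t_in(1) t_in.prems(2) P e by auto
  moreover have lb: "length bsB = length tys" using A(2) B(2) t_in(2) e by (simp add: bprops_def)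
  moreover have "typed \<Delta> (updg \<Gamma>' bsB tys) (substs ssB P0)"
  proof (rule t_in.IH[OF e(3)], rule ballI)
    fix y assume y: "y \<in> fn P0"
    show "sub (updg \<Gamma>' bsB tys (comp ssB y)) (updg \<Gamma> bs tys (comp ssA y))"
      unfolding e(2) using A(2) B(2) y lb t_in.prems(2) P
      by (intro bind_agree[where ssA=ss and ssB=ts]) (auto simp: bprops_def)
  qed
  ultimately show ?case using B by (simp add: typed.t_in)
next
  case (t_out \<Gamma> a tys bs Q)
  then have "tag P = 2" by (metis tag.simps(3) tag_substs)
  then obtain a0 bs0 P0 where P: "P = POut a0 bs0 P0" by (cases P rule: tag.cases) auto
  have e: "a = comp ss a0" "bs = map (comp ss) bs0" "Q = substs ss P0" using t_out.prems(1) P by (auto simp: ch_out)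
  have "\<Gamma>' (comp ts a0) = TCh tys" using t_out(1) t_out.prems(2) P e by auto
  moreover have "list_all2 (\<lambda>b t. sub (\<Gamma>' b) t) (map (comp ts) bs0) tys"
  proof -
    have "list_all2 (\<lambda>b t. sub (\<Gamma> (comp ss b)) t) bs0 tys" using t_out(2) e by (simp add: list_all2_map1)
    then have len: "length bs0 = length tys" and al: "\<forall>i<length bs0. sub (\<Gamma> (comp ss (bs0!i))) (tys!i)"
      by (auto simp: list_all2_conv_all_nth)
    have "\<forall>i<length bs0. sub (\<Gamma>' (comp ts (bs0!i))) (tys!i)"
    proof (intro allI impI)
      fix i assume i: "i < length bs0"
      have "bs0 ! i \<in> fn P" using P i by simp
      then show "sub (\<Gamma>' (comp ts (bs0!i))) (tys!i)" using t_out.prems(2) sub_trans al i by blast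
    qed
    then have "list_all2 (\<lambda>b t. sub (\<Gamma>' (comp ts b)) t) bs0 tys" using len by (simp add: list_all2_conv_all_nth)
    then show ?thesis by (simp add: list_all2_map1)
  qed
  moreover have "typed \<Delta> \<Gamma>' (substs ts P0)" using t_out.IH[OF e(3)] t_out.prems(2) P by auto
  ultimately show ?case using P by (simp add: ch_out typed.t_out)
next
  case (t_res \<Gamma> a T Q)
  then have "tag P = 3" by (metis tag.simps(4) tag_substs)
  then obtain a0 P0 where P: "P = PRes a0 P0" by (cases P rule: tag.cases) auto
  obtain aA ssA where A: "substs ss P = PRes aA (substs ssA P0)" "bprops ss P0 [a0] [aA] ssA" using ch_res P by blast
  obtain aB ssB where B: "substs ts P = PRes aB (substs ssB P0)" "bprops ts P0 [a0] [aB] ssB" using ch_res P by blast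
  have e: "a = aA" "Q = substs ssA P0" using t_res.prems(1) A by auto
  have "typed \<Delta> (\<Gamma>'(aB := T)) (substs ssB P0)"
  proof (rule t_res.IH[OF e(2)], rule ballI)
    fix y assume y: "y \<in> fn P0"
    have "sub (updg \<Gamma>' [aB] [T] (comp ssB y)) (updg \<Gamma> [aA] [T] (comp ssA y))"
      using A(2) B(2) y t_res.prems(2) P
      by (intro bind_agree[where ssA=ss and ssB=ts]) (auto simp: bprops_def)
    then show "sub ((\<Gamma>'(aB := T)) (comp ssB y)) ((\<Gamma>(a := T)) (comp ssA y))" using e by simp
  qed
  then show ?case using B by (simp add: typed.t_res)
next
  case (t_par \<Gamma> Q1 Q2)
  then have "tag P = 4" by (metis tag.simps(5) tag_substs)
  then obtain P1 P2 where P: "P = PPar P1 P2" by (cases P rule: tag.cases) auto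
  show ?case using t_par P by (auto simp: ch_par intro!: typed.t_par)
next
  case (t_rep_d \<Gamma> a bs Q)
  then have "tag P = 5" by (metis tag.simps(6) tag_substs)
  then obtain a0 bs0 P0 where P: "P = PRep a0 bs0 P0" by (cases P rule: tag.cases) auto
  obtain bsA ssA where A: "substs ss P = PRep (comp ss a0) bsA (substs ssA P0)" using ch_rep P by blast
  obtain bsB ssB where B: "substs ts P = PRep (comp ts a0) bsB (substs ssB P0)" using ch_rep P by blast
  have "\<Gamma> (comp ss a0) = TD" using t_rep_d A by simp
  then have "\<Gamma>' (comp ts a0) = TD" using t_rep_d(3) P by auto
  then show ?case using B by (simp add: typed.t_rep_d)
next
  case (t_rep \<Gamma> a tys bs Q)
  then have "tag P = 5" by (metis tag.simps(6) tag_substs)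
  then obtain a0 bs0 P0 where P: "P = PRep a0 bs0 P0" by (cases P rule: tag.cases) auto
  obtain bsA ssA where A: "substs ss P = PRep (comp ss a0) bsA (substs ssA P0)" "bprops ss P0 bs0 bsA ssA" using ch_rep P by blast
  obtain bsB ssB where B: "substs ts P = PRep (comp ts a0) bsB (substs ssB P0)" "bprops ts P0 bs0 bsB ssB" using ch_rep P by blast
  have e: "a = comp ss a0" "bs = bsA" "Q = substs ssA P0" using t_rep.prems(1) A by auto
  have "\<Gamma>' (comp ts a0) = TCh tys" using t_rep(1) t_rep.prems(2) P e by auto
  moreover have lb: "length bsB = length tys" using A(2) B(2) t_rep(2) e by (simp add: bprops_def)
  moreover have "typed \<Delta> (updg \<Gamma>' bsB tys) (substs ssB P0)"
  proof (rule t_rep.IH[OF e(3)], rule ballI)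
    fix y assume y: "y \<in> fn P0"
    show "sub (updg \<Gamma>' bsB tys (comp ssB y)) (updg \<Gamma> bs tys (comp ssA y))"
      unfolding e(2) using A(2) B(2) y lb t_rep.prems(2) P
      by (intro bind_agree[where ssA=ss and ssB=ts]) (auto simp: bprops_def)
  qed
  ultimately show ?case using B by (simp add: typed.t_rep)
next
  case (t_abs xs as \<Gamma> Q)
  then have "tag P = 6" by (metis tag.simps(7) tag_substs)
  then obtain xs0 P0 as0 where P: "P = PApp (Abs xs0 P0) as0" by (cases P rule: tag.cases) auto
  obtain xsA ssA where A: "substs ss P = PApp (Abs xsA (substs ssA P0)) (map (comp ss) as0)" "bprops ss P0 xs0 xsA ssA" using ch_abs P by blast
  obtain xsB ssB where B: "substs ts P = PApp (Abs xsB (substs ssB P0)) (map (comp ts) as0)" "bprops ts P0 xs0 xsB ssB" using ch_abs P by blast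
  have e: "xs = xsA" "Q = substs ssA P0" "as = map (comp ss) as0" using t_abs.prems(1) A by auto
  have l: "length as0 = length xs0" using t_abs(1) e A(2) by (simp add: bprops_def)
  have lB: "length xsB = length (map (comp ts) as0)" using B(2) l by (simp add: bprops_def)
  have h1: "subst (updg id xs as) Q = substs (updg id xsA (map (comp ss) as0) # ssA) P0" using e by simp
  have h2: "\<forall>y\<in>fn P0. sub (\<Gamma>' (comp (updg id xsB (map (comp ts) as0) # ssB) y)) (\<Gamma> (comp (updg id xsA (map (comp ss) as0) # ssA) y))"
  proof
    fix y assume y: "y \<in> fn P0"
    have ag: "\<And>z. z \<in> set as0 \<or> (z \<in> fn P0 \<and> z \<notin> set xs0) \<Longrightarrow> sub (\<Gamma>' (comp ts z)) (\<Gamma> (comp ss z))"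
      using t_abs.prems(2) P by auto
    show "sub (\<Gamma>' (comp (updg id xsB (map (comp ts) as0) # ssB) y)) (\<Gamma> (comp (updg id xsA (map (comp ss) as0) # ssA) y))"
      using abs_agree[where \<Gamma>=\<Gamma> and \<Gamma>'=\<Gamma>', OF A(2) B(2) y l ag] by simp
  qed
  have "typed \<Delta> \<Gamma>' (substs (updg id xsB (map (comp ts) as0) # ssB) P0)" by (rule t_abs.IH[OF h1 h2])
  then show ?case using B lB by (simp add: typed.t_abs)
next
  case (t_const k xs Pk as \<Gamma>)
  then have "tag P = 7" by (metis tag.simps(8) tag_substs)
  then obtain k0 as0 where P0: "P = PApp (Const k0) as0" by (cases P rule: tag.cases) auto
  have e: "as = map (comp ss) as0" "k0 = k" using t_const.prems(1) P0 by (simp_all add: ch_const)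
  have P: "P = PApp (Const k) as0" using P0 e by simp
  have fnk: "fn Pk \<subseteq> set xs" using wf t_const(1) unfolding wf_defs_def by (metis fst_conv snd_conv)
  have l: "length xs = length as0" using t_const(2) e by simp
  have "typed \<Delta> \<Gamma>' (substs [updg id xs (map (comp ts) as0)] Pk)"
  proof (rule t_const.IH[where ss="[updg id xs (map (comp ss) as0)]" and P=Pk], simp add: e, rule ballI)
    fix y assume y: "y \<in> fn Pk"
    then have yx: "y \<in> set xs" using fnk by auto
    define j where "j = lastidx xs y"
    have j: "j < length xs" unfolding j_def using yx by (rule lastidx_lt)
    have 1: "updg id xs (map (comp ss) as0) y = comp ss (as0 ! j)" using yx l j by (simp add: updg_in j_def)
    have 2: "updg id xs (map (comp ts) as0) y = comp ts (as0 ! j)" using yx l j by (simp add: updg_in j_def)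
    have "as0 ! j \<in> fn P" using P j l by simp
    then show "sub (\<Gamma>' (comp [updg id xs (map (comp ts) as0)] y)) (\<Gamma> (comp [updg id xs (map (comp ss) as0)] y))"
      using 1 2 t_const.prems(2) by simp
  qed
  then show ?case using P t_const(1) l by (simp add: ch_const typed.t_const)
qed


lemma typed_in_iff: "typed \<Delta> \<Gamma> (PIn a bs P) \<longleftrightarrow> \<Gamma> a = TD \<or> (\<exists>ts. \<Gamma> a = TCh ts \<and> length bs = length ts \<and> typed \<Delta> (updg \<Gamma> bs ts) P)"
  by (auto elim: tc_in intro: typed.intros)
lemma typed_rep_iff: "typed \<Delta> \<Gamma> (PRep a bs P) \<longleftrightarrow> \<Gamma> a = TD \<or> (\<exists>ts. \<Gamma> a = TCh ts \<and> length bs = length ts \<and> typed \<Delta> (updg \<Gamma> bs ts) P)"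
  by (auto elim: tc_rep intro: typed.intros)
lemma typed_out_iff: "typed \<Delta> \<Gamma> (POut a bs P) \<longleftrightarrow> (\<exists>ts. \<Gamma> a = TCh ts \<and> list_all2 (\<lambda>b t. sub (\<Gamma> b) t) bs ts \<and> typed \<Delta> \<Gamma> P)"
  by (auto elim: tc_out intro: typed.intros)
lemma typed_res_iff: "typed \<Delta> \<Gamma> (PRes a P) \<longleftrightarrow> (\<exists>T. typed \<Delta> (\<Gamma>(a:=T)) P)"
  by (auto elim: tc_res intro: typed.intros)
lemma typed_par_iff: "typed \<Delta> \<Gamma> (PPar P Q) \<longleftrightarrow> typed \<Delta> \<Gamma> P \<and> typed \<Delta> \<Gamma> Q"
  by (auto elim: tc_par intro: typed.intros)
lemma typed_abs_iff: "typed \<Delta> \<Gamma> (PApp (Abs xs P) as) \<longleftrightarrow> length xs = length as \<and> typed \<Delta> \<Gamma> (subst (updg id xs as) P)"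
  by (auto elim: tc_abs intro: typed.intros)
lemma typed_const_iff: "typed \<Delta> \<Gamma> (PApp (Const k) as) \<longleftrightarrow> length (fst (\<Delta> k)) = length as \<and> typed \<Delta> \<Gamma> (subst (updg id (fst (\<Delta> k)) as) (snd (\<Delta> k)))"
  by (cases "\<Delta> k") (auto elim: tc_const intro: typed.intros)
lemma typed_nil_iff: "typed \<Delta> \<Gamma> PNil" by (rule t_nil)
lemma typed_hole_iff: "\<not> typed \<Delta> \<Gamma> (Hole as)" by (auto elim: tc_hole)

context
  fixes ob and \<Delta> :: "('s,'k) defs"
  assumes wf: "wf_defs ob \<Delta>"
begin

lemma C1a: "typed \<Delta> \<Gamma> (subst \<sigma> P) \<Longrightarrow> typed \<Delta> (\<Gamma> \<circ> \<sigma>) P"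
  using SL[OF _ wf, of \<Gamma> "substs [\<sigma>] P" "[\<sigma>]" P "\<Gamma> \<circ> \<sigma>" "[]"] by simp

lemma C1b: "typed \<Delta> (\<Gamma> \<circ> \<sigma>) P \<Longrightarrow> typed \<Delta> \<Gamma> (subst \<sigma> P)"
  using SL[OF _ wf, of "\<Gamma> \<circ> \<sigma>" P "[]" P \<Gamma> "[\<sigma>]"] by simp

lemma C1: "typed \<Delta> \<Gamma> (subst \<sigma> P) \<longleftrightarrow> typed \<Delta> (\<Gamma> \<circ> \<sigma>) P"
  using C1a C1b by blast

lemma C2: "typed \<Delta> \<Gamma> P \<Longrightarrow> (\<forall>y\<in>fn P. sub (\<Gamma>' y) (\<Gamma> y)) \<Longrightarrow> typed \<Delta> \<Gamma>' P"
  using SL[OF _ wf, of \<Gamma> P "[]" P \<Gamma>' "[]"] by simp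

lemma C2eq: "(\<forall>y\<in>fn P. \<Gamma>' y = \<Gamma> y) \<Longrightarrow> typed \<Delta> \<Gamma> P \<longleftrightarrow> typed \<Delta> \<Gamma>' P"
  using C2[of \<Gamma> P \<Gamma>'] C2[of \<Gamma>' P \<Gamma>] by auto

lemma alpha_agree:
  assumes d: "distinct bs'" and m: "map fst bs' = map fst bs" and f: "set bs' \<inter> (fn P - set bs) = {}"
    and l: "length ts = length bs"
  shows "\<forall>y\<in>fn P. (updg \<Gamma> bs' ts \<circ> updg id bs bs') y = updg \<Gamma> bs ts y"
proof
  fix y assume y: "y \<in> fn P"
  have lb: "length bs' = length bs" using m by (metis length_map)
  show "(updg \<Gamma> bs' ts \<circ> updg id bs bs') y = updg \<Gamma> bs ts y"
  proof (cases "y \<in> set bs")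
    case True then show ?thesis using L1[OF lb cmpt_distinct[OF lb d] True l] by simp
  next
    case False
    then have "y \<notin> set bs'" using f y by auto
    then show ?thesis using False by (simp add: updg_notin)
  qed
qed

lemma sc_inv: "sc \<Delta> P Q \<Longrightarrow> typed \<Delta> \<Gamma> P \<longleftrightarrow> typed \<Delta> \<Gamma> Q"
proof (induction arbitrary: \<Gamma> rule: sc.induct)
  case (sc_in P Q a bs) then show ?case by (simp add: typed_in_iff)
next
  case (sc_out P Q a bs) then show ?case by (simp add: typed_out_iff)
next
  case (sc_res P Q a) then show ?case unfolding typed_res_iff by blast
next
  case (sc_par P Q R) then show ?case by (simp add: typed_par_iff)
next
  case (sc_rep P Q a bs) then show ?case by (simp add: typed_rep_iff)
next
  case (sc_app P Q xs as) then show ?case unfolding typed_abs_iff C1 by blast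
next
  case (sc_par_nil P) then show ?case by (simp add: typed_par_iff typed_nil_iff)
next
  case (sc_par_comm P Q) then show ?case by (auto simp: typed_par_iff)
next
  case (sc_par_assoc P Q R) then show ?case by (auto simp: typed_par_iff)
next
  case (sc_res_nil a) then show ?case by (simp add: typed_res_iff typed_nil_iff)
next
  case (sc_res_comm a b P) then show ?case
    by (cases "a = b") (auto simp: typed_res_iff fun_upd_twist)
next
  case (sc_res_par a P Q)
  have "typed \<Delta> \<Gamma> P \<longleftrightarrow> typed \<Delta> (\<Gamma>(a:=T)) P" for T using sc_res_par by (intro C2eq) auto
  then show ?case by (auto simp: typed_res_iff typed_par_iff)
next
  case (sc_rep_unfold a bs P) then show ?case by (auto simp: typed_rep_iff typed_in_iff typed_par_iff)
next
  case (sc_beta xs as P) then show ?case by (simp add: typed_abs_iff)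
next
  case (sc_const k xs P as) then show ?case by (simp add: typed_const_iff)
next
  case (sc_alpha_res b a P)
  have "typed \<Delta> (\<Gamma>(a:=T)) P \<longleftrightarrow> typed \<Delta> (\<Gamma>(b:=T)) (subst (id(a:=b)) P)" for T
  proof -
    have "typed \<Delta> (\<Gamma>(b:=T)) (subst (id(a:=b)) P) \<longleftrightarrow> typed \<Delta> (\<Gamma>(b:=T) \<circ> id(a:=b)) P" by (rule C1)
    also have "\<dots> \<longleftrightarrow> typed \<Delta> (\<Gamma>(a:=T)) P" using sc_alpha_res(1) by (intro C2eq) auto
    finally show ?thesis by simp
  qed
  then show ?case by (simp add: typed_res_iff)
next
  case (sc_alpha_in bs' bs a P)
  have lb: "length bs' = length bs" using sc_alpha_in(2) by (metis length_map)
  have "typed \<Delta> (updg \<Gamma> bs ts) P \<longleftrightarrow> typed \<Delta> (updg \<Gamma> bs' ts) (subst (updg id bs bs') P)"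
    if l: "length bs = length ts" for ts
  proof -
    have "typed \<Delta> (updg \<Gamma> bs' ts) (subst (updg id bs bs') P) \<longleftrightarrow> typed \<Delta> (updg \<Gamma> bs' ts \<circ> updg id bs bs') P" by (rule C1)
    also have "\<dots> \<longleftrightarrow> typed \<Delta> (updg \<Gamma> bs ts) P"
      using alpha_agree[OF sc_alpha_in(1,2) _ l[symmetric], of P \<Gamma>] sc_alpha_in(3)
      by (intro C2eq) auto
    finally show ?thesis by simp
  qed
  then show ?case using lb by (auto simp: typed_in_iff)
next
  case (sc_alpha_rep bs' bs a P)
  have lb: "length bs' = length bs" using sc_alpha_rep(2) by (metis length_map)
  have "typed \<Delta> (updg \<Gamma> bs ts) P \<longleftrightarrow> typed \<Delta> (updg \<Gamma> bs' ts) (subst (updg id bs bs') P)"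
    if l: "length bs = length ts" for ts
  proof -
    have "typed \<Delta> (updg \<Gamma> bs' ts) (subst (updg id bs bs') P) \<longleftrightarrow> typed \<Delta> (updg \<Gamma> bs' ts \<circ> updg id bs bs') P" by (rule C1)
    also have "\<dots> \<longleftrightarrow> typed \<Delta> (updg \<Gamma> bs ts) P"
      using alpha_agree[OF sc_alpha_rep(1,2) _ l[symmetric], of P \<Gamma>] sc_alpha_rep(3)
      by (intro C2eq) auto
    finally show ?thesis by simp
  qed
  then show ?case using lb by (auto simp: typed_rep_iff)
qed auto

lemma red_inv: "red \<Delta> P Q \<Longrightarrow> typed \<Delta> \<Gamma> P \<Longrightarrow> typed \<Delta> \<Gamma> Q"
proof (induction arbitrary: \<Gamma> rule: red.induct)
  case (red_comm bs cs a P Q)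
  from red_comm(2) obtain ts where o: "\<Gamma> a = TCh ts" "list_all2 (\<lambda>b t. sub (\<Gamma> b) t) cs ts" "typed \<Delta> \<Gamma> Q"
    by (auto simp: typed_par_iff typed_out_iff)
  from red_comm(2) o(1) have i: "length bs = length ts" "typed \<Delta> (updg \<Gamma> bs ts) P"
    by (auto simp: typed_par_iff typed_in_iff)
  have "typed \<Delta> (\<Gamma> \<circ> updg id bs cs) P"
  proof (rule C2[OF i(2)], rule ballI)
    fix y assume y: "y \<in> fn P"
    show "sub ((\<Gamma> \<circ> updg id bs cs) y) (updg \<Gamma> bs ts y)"
    proof (cases "y \<in> set bs")
      case True
      define j where "j = lastidx bs y"
      have j: "j < length bs" unfolding j_def using True by (rule lastidx_lt)
      have "(\<Gamma> \<circ> updg id bs cs) y = \<Gamma> (cs ! j)" using True red_comm(1) by (simp add: updg_in j_def)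
      moreover have "updg \<Gamma> bs ts y = ts ! j" using True i(1) by (simp add: updg_in j_def)
      moreover have "sub (\<Gamma> (cs ! j)) (ts ! j)" using o(2) j red_comm(1) by (simp add: list_all2_conv_all_nth)
      ultimately show ?thesis by simp
    qed (simp add: updg_notin)
  qed
  then show ?case using o(3) by (simp add: typed_par_iff C1)
next
  case (red_par P P' Q) then show ?case by (simp add: typed_par_iff)
next
  case (red_res P P' a) then show ?case by (auto simp: typed_res_iff)
next
  case (red_struct P P' Q' Q) then show ?case using sc_inv by blast
qed

lemma reds_inv: "(red \<Delta>)\<^sup>*\<^sup>* P Q \<Longrightarrow> typed \<Delta> \<Gamma> P \<Longrightarrow> typed \<Delta> \<Gamma> Q"
  by (induction rule: rtranclp_induct) (auto intro: red_inv)

lemma no_obs: "typed \<Delta> \<Gamma> P \<Longrightarrow> \<Gamma> ok = TD \<Longrightarrow> \<not> obs ok P"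
proof (induction P arbitrary: \<Gamma>)
  case (POut b bs P) then show ?case by (auto simp: typed_out_iff)
next
  case (PRes b P)
  then obtain T where T: "typed \<Delta> (\<Gamma>(b:=T)) P" by (auto simp: typed_res_iff)
  show ?case
  proof
    assume "obs ok (PRes b P)"
    then have "ok \<noteq> b" "obs ok P" by auto
    then show False using PRes.IH[OF T] PRes.prems(2) by simp
  qed
next
  case (PPar P Q) then show ?case by (auto simp: typed_par_iff)
qed auto

lemma no_wbarb: "typed \<Delta> \<Gamma> P \<Longrightarrow> \<Gamma> ok = TD \<Longrightarrow> \<not> wbarb \<Delta> P ok"
  unfolding wbarb_def barb_def using reds_inv sc_inv no_obs by blast

end


definition ctx :: "'s \<Rightarrow> 's \<Rightarrow> nat \<Rightarrow> ('s,'k) proc" where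
  "ctx v c x = PPar (PIn (lvar v x) [(v,1),(c,1)] (PIn (c,1) [(v,1)] (POut (lvar v (Suc x)) [(v,1),(c,0)] PNil)))
                    (POut (c,0) [lvar v x] PNil)"

definition G0 :: "'s \<Rightarrow> 's \<Rightarrow> nat \<Rightarrow> 's name \<Rightarrow> ty" where
  "G0 v c x = (\<lambda>_. TD)(lvar v x := TCh [TN, TD], (c,0) := TCh [TN])"

lemma par_neq[simp]: "2 * n \<noteq> Suc 0" "2 * n \<noteq> Suc (Suc (Suc 0))" "2 * n \<noteq> Suc (Suc (Suc (Suc (Suc 0))))"
  "Suc 0 \<noteq> 2 * n" "Suc (Suc (Suc 0)) \<noteq> 2 * n" "Suc (Suc (Suc (Suc (Suc 0)))) \<noteq> 2 * n"
  by presburger+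

lemma par_neq2[simp]: "2 * n \<noteq> (1::nat)" "2 * n \<noteq> (3::nat)" "2 * n \<noteq> (5::nat)"
  "(1::nat) \<noteq> 2 * n" "(3::nat) \<noteq> 2 * n" "(5::nat) \<noteq> 2 * n"
  by presburger+

context
  fixes ob and \<Delta> :: "('s,'k) defs" and v c :: 's and x :: nat
  assumes wf: "wf_defs ob \<Delta>" and vc: "v \<noteq> c"
begin

lemma typed_ctx: "typed \<Delta> (G0 v c x) (ctx v c x)"
  using vc by (simp add: ctx_def G0_def typed_par_iff typed_in_iff typed_out_iff lvar_def sub_def typed_nil_iff)

lemma tabs: "length xs = length as \<Longrightarrow> typed \<Delta> (\<Gamma> \<circ> updg id xs as) P \<Longrightarrow> typed \<Delta> \<Gamma> (PApp (Abs xs P) as)"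
  by (rule t_abs) (auto intro: C1b[OF wf])

lemma typed_bad1:
  assumes V: "is_value V"
  shows "typed \<Delta> (G0 v c x) (PApp (encV v c (LApp (Lam z (Var z)) (LApp (Var x) V))) [(c,0)])"
  apply (simp only: encV.simps)
  apply (rule tabs, simp)
  apply (rule t_res[where T="TCh [TD]"])
  apply (rule t_par)
   apply (rule tabs, simp)
   apply (rule t_res[where T="TD"])
   apply (rule t_out[where ts="[TD]"])
     apply (simp add: vc)
    apply (simp add: vc)
   apply (rule t_rep_d, simp)
  apply (rule t_in[where ts="[TD]"], simp add: vc, simp)
  apply (rule t_res[where T="TD"])
  apply (rule t_par)
   prefer 2 apply (rule t_in_d, simp add: vc)
  apply (rule tabs, simp)
  apply (rule t_res[where T="TCh [TCh [TN, TD]]"])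
  apply (rule t_par)
   apply (rule tabs, simp)
   apply (rule t_out[where ts="[TCh [TN, TD]]"])
     apply (simp add: vc)
    apply (simp add: vc G0_def lvar_def)
   apply (rule t_nil)
  apply (rule t_in[where ts="[TCh [TN, TD]]"], simp add: vc, simp)
  using V apply (cases V)
    apply (rule t_res[where T="TCh [G0 v c x (lvar v (case V of Var n \<Rightarrow> n))]"])
    apply (rule t_par)
     apply (simp only: encV.simps)
     apply (rule tabs, simp)
     apply (rule t_out[where ts="[G0 v c x (lvar v (case V of Var n \<Rightarrow> n))]"])
       apply (simp add: vc)
      apply (simp add: vc G0_def lvar_def)
     apply (rule t_nil)
    apply (rule t_in[where ts="[G0 v c x (lvar v (case V of Var n \<Rightarrow> n))]"], simp add: vc, simp)
    apply (rule t_out[where ts="[TN, TD]"])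
      apply (simp add: vc)
     apply (simp add: vc sub_def)
    apply (rule t_nil)
   apply (rule t_res[where T="TCh [TD]"])
   apply (rule t_par)
    apply (simp only: encV.simps)
    apply (rule tabs, simp)
    apply (rule t_res[where T="TD"])
    apply (rule t_out[where ts="[TD]"])
      apply (simp add: vc)
     apply (simp add: vc)
    apply (rule t_rep_d, simp)
   apply (rule t_in[where ts="[TD]"], simp add: vc, simp)
   apply (rule t_out[where ts="[TN, TD]"])
     apply (simp add: vc)
    apply (simp add: vc sub_def)
   apply (rule t_nil)
  apply simp
  done

lemma typed_bad2:
  assumes V: "is_value V"
  shows "typed \<Delta> (G0 v c x) (PApp (encV' v c (LApp (Lam z (Var z)) (LApp (Var x) V))) [(c,0)])"
  apply (simp only: encV'.simps)
  apply (rule tabs, simp)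
  apply (rule t_res[where T="TCh [TD]"])
  apply (rule t_par)
   apply (rule tabs, simp)
   apply (rule t_res[where T="TD"])
   apply (rule t_out[where ts="[TD]"])
     apply (simp add: vc)
    apply (simp add: vc)
   apply (rule t_rep_d, simp)
  apply (rule t_in[where ts="[TD]"], simp add: vc, simp)
  apply (rule t_res[where T="TD"])
  apply (rule t_par)
   prefer 2 apply (rule t_in_d, simp add: vc)
  apply (rule tabs, simp)
  apply (rule t_res[where T="TCh [TCh [TN, TD]]"])
  apply (rule t_par)
   apply (rule tabs, simp)
   apply (rule t_res[where T="TCh [TN, TD]"])
   apply (rule t_out[where ts="[TCh [TN, TD]]"])
     apply (simp add: vc)
    apply (simp add: vc)
   apply (rule t_rep[where ts="[TN, TD]"])
     apply (simp add: vc)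
    apply simp
   apply (rule t_out[where ts="[TN, TD]"])
     apply (simp add: vc G0_def lvar_def)
    apply (simp add: vc)
   apply (rule t_nil)
  apply (rule t_in[where ts="[TCh [TN, TD]]"], simp add: vc, simp)
  apply (rule t_res[where T="TCh [TD]"])
  apply (rule t_par)
   prefer 2
   apply (rule t_in[where ts="[TD]"], simp add: vc, simp)
   apply (rule t_out[where ts="[TN, TD]"])
     apply (simp add: vc)
    apply (simp add: vc sub_def)
   apply (rule t_nil)
  using V apply (cases V)
    apply (simp only: encV'.simps)
    apply (rule tabs, simp)
    apply (rule t_res[where T="TD"])
    apply (rule t_out[where ts="[TD]"])
      apply (simp add: vc)
     apply (simp add: vc)
    apply (rule t_rep_d, simp)
   apply (simp only: encV'.simps)
   apply (rule tabs, simp)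
   apply (rule t_res[where T="TD"])
   apply (rule t_out[where ts="[TD]"])
     apply (simp add: vc)
    apply (simp add: vc)
   apply (rule t_rep_d, simp)
  apply simp
  done

end


declare subst.simps(2,4,6)[simp del] substa.simps(1)[simp del]

lemma S_res:
  obtains a' where "subst \<sigma> (PRes a P) = PRes a' (subst (\<sigma>(a:=a')) P)" "fst a' = fst a"
    "a' \<notin> \<sigma> ` (fn P - {a})"
proof -
  let ?a' = "(fst a, fresh_idx (\<sigma> ` (fn P - {a})))"
  have "?a' \<notin> \<sigma> ` (fn P - {a})"
    using fresh_idx_gt[of "\<sigma> ` (fn P - {a})"] finite_fn by fastforce
  then show ?thesis using that[of ?a'] by (simp add: subst.simps(4) Let_def)
qed

lemma S_in1:
  obtains b' where "subst \<sigma> (PIn a [b] P) = PIn (\<sigma> a) [b'] (subst (\<sigma>(b:=b')) P)" "fst b' = fst b"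
    "b' \<notin> \<sigma> ` (fn P - {b})"
proof -
  let ?N = "fresh_idx (\<sigma> ` (fn P - set [b]))"
  let ?b' = "(fst b, ?N)"
  have e: "fresh_list ?N [b] = [?b']" by (simp add: fresh_list_def)
  have "?b' \<notin> \<sigma> ` (fn P - {b})"
    using fresh_idx_gt[of "\<sigma> ` (fn P - {b})"] finite_fn by fastforce
  then show ?thesis using that[of ?b'] e by (simp add: subst.simps(2) Let_def)
qed

lemma S_rep2:
  obtains b1' b2' where "subst \<sigma> (PRep a [b1,b2] P) = PRep (\<sigma> a) [b1',b2'] (subst (\<sigma>(b1:=b1', b2:=b2')) P)"
    "fst b1' = fst b1" "fst b2' = fst b2" "b1' \<noteq> b2'"
    "b1' \<notin> \<sigma> ` (fn P - {b1,b2})" "b2' \<notin> \<sigma> ` (fn P - {b1,b2})"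
proof -
  let ?N = "fresh_idx (\<sigma> ` (fn P - set [b1,b2]))"
  have e: "fresh_list ?N [b1,b2] = [(fst b1, ?N), (fst b2, Suc ?N)]" by (simp add: fresh_list_def)
  have f: "finite (\<sigma> ` (fn P - {b1,b2}))" by (intro finite_imageI finite_Diff finite_fn(1))
  have "(fst b1, ?N) \<notin> \<sigma> ` (fn P - {b1,b2})" "(fst b2, Suc ?N) \<notin> \<sigma> ` (fn P - {b1,b2})"
    using fresh_idx_gt[OF f] by fastforce+
  then show ?thesis using that[of "(fst b1, ?N)" "(fst b2, Suc ?N)"] e by (simp add: subst.simps(6) Let_def)
qed

lemma S_rep:
  obtains bs' P' where "subst \<sigma> (PRep a bs P) = PRep (\<sigma> a) bs' P'"
  using that by (simp add: subst.simps(6) Let_def)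

lemma S_abs1:
  obtains k' where "substa \<sigma> (Abs [k] P) = Abs [k'] (subst (\<sigma>(k:=k')) P)" "fst k' = fst k"
    "k' \<notin> \<sigma> ` (fn P - {k})"
proof -
  let ?N = "fresh_idx (\<sigma> ` (fn P - set [k]))"
  let ?k' = "(fst k, ?N)"
  have e: "fresh_list ?N [k] = [?k']" by (simp add: fresh_list_def)
  have "?k' \<notin> \<sigma> ` (fn P - {k})"
    using fresh_idx_gt[of "\<sigma> ` (fn P - {k})"] finite_fn by fastforce
  then show ?thesis using that[of ?k'] e by (simp add: substa.simps(1) Let_def)
qed

definition rs :: "('s,'k) defs \<Rightarrow> ('s,'k) proc \<Rightarrow> ('s,'k) proc \<Rightarrow> bool" where
  "rs \<Delta> = (\<lambda>P Q. sc \<Delta> P Q \<or> red \<Delta> P Q)\<^sup>*\<^sup>*"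

lemma rs_refl: "rs \<Delta> P P" by (simp add: rs_def)
lemma rs_sc: "sc \<Delta> P Q \<Longrightarrow> rs \<Delta> P Q" by (simp add: rs_def r_into_rtranclp)
lemma rs_red: "red \<Delta> P Q \<Longrightarrow> rs \<Delta> P Q" by (simp add: rs_def r_into_rtranclp)
lemma rs_trans: "rs \<Delta> P Q \<Longrightarrow> rs \<Delta> Q R \<Longrightarrow> rs \<Delta> P R" unfolding rs_def by (rule rtranclp_trans)

lemmas [trans] = sc_trans rs_trans

lemma rs_res: "rs \<Delta> P Q \<Longrightarrow> rs \<Delta> (PRes a P) (PRes a Q)"
  unfolding rs_def
proof (induction rule: rtranclp_induct)
  case (step y z) then show ?case
    by (metis (mono_tags, lifting) red_res rtranclp.rtrancl_into_rtrancl sc_res)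
qed simp

lemma rs_parl: "rs \<Delta> P Q \<Longrightarrow> rs \<Delta> (PPar P R) (PPar Q R)"
  unfolding rs_def
proof (induction rule: rtranclp_induct)
  case (step y z) then show ?case
    by (metis (mono_tags, lifting) red_par rtranclp.rtrancl_into_rtrancl sc_par)
qed simp

lemma rs_parr: "rs \<Delta> P Q \<Longrightarrow> rs \<Delta> (PPar R P) (PPar R Q)"
proof -
  assume "rs \<Delta> P Q"
  then have "rs \<Delta> (PPar P R) (PPar Q R)" by (rule rs_parl)
  then show ?thesis by (meson rs_sc rs_trans sc_par_comm)
qed

lemma rs_reds: "rs \<Delta> P Q \<Longrightarrow> \<exists>Q'. (red \<Delta>)\<^sup>*\<^sup>* P Q' \<and> sc \<Delta> Q' Q"
  unfolding rs_def
proof (induction rule: rtranclp_induct)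
  case base then show ?case by (auto intro: sc_refl)
next
  case (step y z)
  then obtain Q' where q: "(red \<Delta>)\<^sup>*\<^sup>* P Q'" "sc \<Delta> Q' y" by blast
  show ?case
  proof (cases "sc \<Delta> y z")
    case True then show ?thesis using q by (blast intro: sc_trans)
  next
    case False
    then have "red \<Delta> y z" using step by blast
    then have "red \<Delta> Q' z" using q(2) by (blast intro: red_struct sc_refl)
    then show ?thesis using q(1) by (blast intro: sc_refl rtranclp.rtrancl_into_rtrancl)
  qed
qed

lemma rs_wbarb: "rs \<Delta> P Q \<Longrightarrow> obs a Q \<Longrightarrow> wbarb \<Delta> P a"
  unfolding wbarb_def barb_def using rs_reds by blast

lemma sc_extr: "a \<notin> fn P \<Longrightarrow> sc \<Delta> (PPar (PRes a Q) P) (PRes a (PPar Q P))"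
  by (meson sc_par_comm sc_res sc_res_par sc_trans)

lemma alpha_fresh:
  assumes "finite Y"
  obtains b where "b \<notin> Y" "fst b = fst a" "sc \<Delta> (PRes a P) (PRes b (subst (id(a:=b)) P))"
proof -
  let ?b = "(fst a, fresh_idx (Y \<union> fn (PRes a P)))"
  have f: "finite (Y \<union> fn (PRes a P))" using assms finite_fn by simp
  have "?b \<notin> Y \<union> fn (PRes a P)" using fresh_idx_gt[OF f] by fastforce
  then show ?thesis using that[of ?b] sc_alpha_res[of ?b a P \<Delta>] by auto
qed

lemma comm_rs: "length bs = length cs \<Longrightarrow> rs \<Delta> (PPar (PIn a bs P) (POut a cs Q)) (PPar (subst (updg id bs cs) P) Q)"
  using rs_red[OF red_comm[of bs cs \<Delta> a P Q]] by simp

lemma comm_rs': "length bs = length cs \<Longrightarrow> rs \<Delta> (PPar (POut a cs Q) (PIn a bs P)) (PPar (subst (updg id bs cs) P) Q)"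
  by (meson comm_rs rs_sc rs_trans sc_par_comm)

inductive hasx :: "'s \<Rightarrow> 's \<Rightarrow> nat \<Rightarrow> ('s,'k) proc \<Rightarrow> bool" for v c x where
  hx_base: "hasx v c x (POut (lvar v x) [w, (c,0)] PNil)"
| hx_parl: "hasx v c x P \<Longrightarrow> hasx v c x (PPar P Q)"
| hx_parr: "hasx v c x Q \<Longrightarrow> hasx v c x (PPar P Q)"
| hx_res: "hasx v c x P \<Longrightarrow> a \<notin> fn (ctx v c x :: ('s,'k) proc) \<Longrightarrow> a \<noteq> lvar v (Suc x) \<Longrightarrow> hasx v c x (PRes a P)"


context
  fixes \<Delta> :: "('s,'k) defs" and v c :: 's and x :: nat
  assumes vc: "v \<noteq> c"
begin

lemma FL: "\<exists>Q. rs \<Delta> (PPar (POut (lvar v x) [w, (c,0)] PNil) (ctx v c x)) Q \<and> obs (lvar v (Suc x)) Q"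
proof -
  let ?ok = "lvar v (Suc x)"
  let ?N = "PNil :: ('s,'k) proc"
  let ?CI = "PIn (lvar v x) [(v,1),(c,1)] (PIn (c,1) [(v,1)] (POut ?ok [(v,1),(c,0)] ?N))"
  let ?CO = "POut (c,0) [lvar v x] ?N"
  let ?O = "POut (lvar v x) [w, (c,0)] ?N"
  have "sc \<Delta> (PPar ?O (PPar ?CI ?CO)) (PPar (PPar ?O ?CI) ?CO)"
    by (meson sc_par_assoc sc_sym)
  also have "sc \<Delta> \<dots> (PPar (PPar ?CI ?O) ?CO)" by (rule sc_par[OF sc_par_comm])
  finally have 1: "rs \<Delta> (PPar ?O (ctx v c x)) (PPar (PPar ?CI ?O) ?CO)" unfolding ctx_def by (rule rs_sc)
  define \<sigma> where "\<sigma> = updg id [(v,1),(c,1)] [w, (c,0)]"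
  have 2: "rs \<Delta> (PPar (PPar ?CI ?O) ?CO) (PPar (PPar (subst \<sigma> (PIn (c,1) [(v,1)] (POut ?ok [(v,1),(c,0)] ?N))) ?N) ?CO)"
    unfolding \<sigma>_def by (rule rs_parl, rule comm_rs) simp
  obtain b' where b': "subst \<sigma> (PIn (c,1) [(v,1)] (POut ?ok [(v,1),(c,0)] ?N)) = PIn (\<sigma> (c,1)) [b'] (subst (\<sigma>((v,1):=b')) (POut ?ok [(v,1),(c,0)] ?N))"
    "fst b' = fst (v,1::nat)" "b' \<notin> \<sigma> ` (fn (POut ?ok [(v,1),(c,0)] ?N) - {(v,1)})"
    by (rule S_in1)
  have s1: "\<sigma> (c,1) = (c,0)" "\<sigma> ?ok = ?ok" "\<sigma> (c,0) = (c,0)" using vc by (auto simp: \<sigma>_def lvar_def)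
  have m: "?ok \<in> fn (POut ?ok [(v,1),(c,0)] ?N) - {(v,1)}" by (simp add: lvar_def)
  have okb: "?ok \<noteq> b'" using b'(3) imageI[OF m, of \<sigma>] s1 by auto
  have e: "subst \<sigma> (PIn (c,1) [(v,1)] (POut ?ok [(v,1),(c,0)] ?N)) = PIn (c,0) [b'] (POut ?ok [b', (c,0)] ?N)"
    using b'(1,2) s1 okb vc by (auto simp: lvar_def)
  have 3: "rs \<Delta> (PPar (PPar (PIn (c,0) [b'] (POut ?ok [b', (c,0)] ?N)) ?N) ?CO) (PPar (PIn (c,0) [b'] (POut ?ok [b', (c,0)] ?N)) ?CO)"
    by (rule rs_parl, rule rs_sc, rule sc_par_nil)
  have 4: "rs \<Delta> (PPar (PIn (c,0) [b'] (POut ?ok [b', (c,0)] ?N)) ?CO) (PPar (subst (updg id [b'] [lvar v x]) (POut ?ok [b', (c,0)] ?N)) ?N)"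
    by (rule comm_rs) simp
  have 5: "subst (updg id [b'] [lvar v x]) (POut ?ok [b', (c,0)] ?N) = POut ?ok [lvar v x, (c,0)] ?N"
    using okb b'(2) vc by auto
  have h2: "rs \<Delta> (PPar (PPar ?CI ?O) ?CO) (PPar (PPar (PIn (c,0) [b'] (POut ?ok [b', (c,0)] ?N)) ?N) ?CO)"
    using 2 unfolding e .
  have h4: "rs \<Delta> (PPar (PIn (c,0) [b'] (POut ?ok [b', (c,0)] ?N)) ?CO) (PPar (POut ?ok [lvar v x, (c,0)] ?N) ?N)"
    using 4 unfolding 5 .
  have "rs \<Delta> (PPar ?O (ctx v c x)) (PPar (POut ?ok [lvar v x, (c,0)] ?N) ?N)"
    using rs_trans[OF 1 rs_trans[OF h2 rs_trans[OF 3 h4]]] .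
  then show ?thesis by (intro exI[of _ "PPar (POut ?ok [lvar v x, (c,0)] ?N) ?N"]) simp
qed

lemma hasx_reach: "hasx v c x E \<Longrightarrow> \<exists>Q. rs \<Delta> (PPar E (ctx v c x)) Q \<and> obs (lvar v (Suc x)) Q"
proof (induction rule: hasx.induct)
  case (hx_base w) then show ?case using FL by blast
next
  case (hx_parl P Q)
  then obtain Q' where q: "rs \<Delta> (PPar P (ctx v c x)) Q'" "obs (lvar v (Suc x)) Q'" by blast
  have "sc \<Delta> (PPar (PPar P Q) (ctx v c x)) (PPar (PPar P (ctx v c x)) Q)"
    by (meson sc_par_assoc sc_par_comm sc_par sc_sym sc_trans)
  then have "rs \<Delta> (PPar (PPar P Q) (ctx v c x)) (PPar Q' Q)"
    using rs_parl[OF q(1)] by (meson rs_sc rs_trans)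
  then show ?case using q(2) by auto
next
  case (hx_parr Q P)
  then obtain Q' where q: "rs \<Delta> (PPar Q (ctx v c x)) Q'" "obs (lvar v (Suc x)) Q'" by blast
  have "sc \<Delta> (PPar (PPar P Q) (ctx v c x)) (PPar (PPar Q (ctx v c x)) P)"
    by (meson sc_par_assoc sc_par_comm sc_par sc_sym sc_trans)
  then have "rs \<Delta> (PPar (PPar P Q) (ctx v c x)) (PPar Q' P)"
    using rs_parl[OF q(1)] by (meson rs_sc rs_trans)
  then show ?case using q(2) by auto
next
  case (hx_res P a)
  then obtain Q' where q: "rs \<Delta> (PPar P (ctx v c x)) Q'" "obs (lvar v (Suc x)) Q'" by blast
  have "rs \<Delta> (PPar (PRes a P) (ctx v c x)) (PRes a Q')"
    using sc_extr[OF hx_res(2)] rs_res[OF q(1)] by (meson rs_sc rs_trans)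
  then show ?case using q(2) hx_res(3) by auto
qed

end


definition vshape :: "'s \<Rightarrow> 's \<Rightarrow> ('s,'k) pabs \<Rightarrow> bool" where
  "vshape v c F \<longleftrightarrow> (\<exists>k w. F = Abs [k] (POut k [w] PNil) \<and> fst k = c) \<or>
     (\<exists>k y bs S. F = Abs [k] (PRes y (POut k [y] (PRep y bs S))) \<and> fst k = c \<and> fst y = v)"

lemma res_body_subst:
  assumes "fst k \<noteq> fst y"
  shows "\<exists>y' bs' S'. subst \<sigma> (PRes y (POut k [y] (PRep y bs S))) = PRes y' (POut (\<sigma> k) [y'] (PRep y' bs' S')) \<and> fst y' = fst y"
proof -
  obtain y' where y': "subst \<sigma> (PRes y (POut k [y] (PRep y bs S))) = PRes y' (subst (\<sigma>(y:=y')) (POut k [y] (PRep y bs S)))"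
    "fst y' = fst y" by (rule S_res)
  obtain bs' S' where r: "subst (\<sigma>(y:=y')) (PRep y bs S) = PRep ((\<sigma>(y:=y')) y) bs' S'" by (rule S_rep)
  have "k \<noteq> y" using assms by auto
  then show ?thesis using y' r by auto
qed

lemma vshape_subst:
  fixes F :: "('s,'k) pabs"
  assumes vc: "v \<noteq> c" and F: "vshape v c F"
  shows "vshape v c (substa \<sigma> F)"
  using F[unfolded vshape_def]
proof (elim disjE exE conjE)
  fix k w assume F: "F = Abs [k] (POut k [w] PNil)" and k: "fst k = c"
  obtain k' where k': "substa \<sigma> (Abs [k] (POut k [w] (PNil::('s,'k) proc))) = Abs [k'] (subst (\<sigma>(k:=k')) (POut k [w] PNil))"
    "fst k' = fst k" by (rule S_abs1)
  have e: "substa \<sigma> F = Abs [k'] (POut k' [(\<sigma>(k:=k')) w] PNil)" using k'(1) by (simp add: F fun_upd_same del: fun_upd_apply)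
  show ?thesis unfolding vshape_def
    by (rule disjI1, rule exI[of _ k'], rule exI[of _ "(\<sigma>(k:=k')) w"]) (use e k k'(2) in simp)
next
  fix k y bs S assume F: "F = Abs [k] (PRes y (POut k [y] (PRep y bs S)))" and k: "fst k = c" and y: "fst y = v"
  obtain k' where k': "substa \<sigma> (Abs [k] (PRes y (POut k [y] (PRep y bs S)))) = Abs [k'] (subst (\<sigma>(k:=k')) (PRes y (POut k [y] (PRep y bs S))))"
    "fst k' = fst k" by (rule S_abs1)
  obtain y' bs' S' where r: "subst (\<sigma>(k:=k')) (PRes y (POut k [y] (PRep y bs S))) = PRes y' (POut ((\<sigma>(k:=k')) k) [y'] (PRep y' bs' S'))"
    "fst y' = fst y" using res_body_subst[of k y "\<sigma>(k:=k')" bs S] k y vc by auto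
  show ?thesis unfolding vshape_def
    by (rule disjI2, intro exI[of _ k'] exI[of _ y'] exI[of _ bs'] exI[of _ S']) (use F k' r k y in simp)
qed

lemma vshape_emit:
  assumes vc: "v \<noteq> c" and F: "vshape v c F" and k0: "fst k0 = c" and Y: "finite Y"
  shows "(\<exists>w. sc \<Delta> (PApp F [k0]) (POut k0 [w] PNil)) \<or>
         (\<exists>y bs S. y \<notin> Y \<and> fst y = v \<and> sc \<Delta> (PApp F [k0]) (PRes y (POut k0 [y] (PRep y bs S))))"
  using F unfolding vshape_def
proof (elim disjE exE conjE)
  fix k w assume F: "F = Abs [k] (POut k [w] PNil)" and k: "fst k = c"
  have "sc \<Delta> (PApp F [k0]) (subst (updg id [k] [k0]) (POut k [w] PNil))"
    unfolding F using sc_beta[of "[k]" "[k0]" \<Delta> "POut k [w] PNil"] by simp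
  then have "sc \<Delta> (PApp F [k0]) (POut k0 [(id(k:=k0)) w] PNil)" by simp
  then show ?thesis by blast
next
  fix k y bs S assume F: "F = Abs [k] (PRes y (POut k [y] (PRep y bs S)))" and k: "fst k = c" and y: "fst y = v"
  have 1: "sc \<Delta> (PApp F [k0]) (subst (id(k:=k0)) (PRes y (POut k [y] (PRep y bs S))))"
    unfolding F using sc_beta[of "[k]" "[k0]" \<Delta> "PRes y (POut k [y] (PRep y bs S))"] by simp
  have ky: "fst k \<noteq> fst y" using k y vc by simp
  obtain y1 bs1 S1 where r0: "subst (id(k:=k0)) (PRes y (POut k [y] (PRep y bs S))) = PRes y1 (POut ((id(k:=k0)) k) [y1] (PRep y1 bs1 S1))"
    "fst y1 = fst y" using res_body_subst[OF ky, of "id(k:=k0)" bs S] by blast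
  have r: "subst (id(k:=k0)) (PRes y (POut k [y] (PRep y bs S))) = PRes y1 (POut k0 [y1] (PRep y1 bs1 S1))"
    "fst y1 = v" using r0 y by simp_all
  obtain y2 where y2: "y2 \<notin> Y" "fst y2 = fst y1" "sc \<Delta> (PRes y1 (POut k0 [y1] (PRep y1 bs1 S1))) (PRes y2 (subst (id(y1:=y2)) (POut k0 [y1] (PRep y1 bs1 S1))))"
    using alpha_fresh[OF Y] by blast
  obtain bs2 S2 where r2: "subst (id(y1:=y2)) (PRep y1 bs1 S1) = PRep ((id(y1:=y2)) y1) bs2 S2" by (rule S_rep)
  have "k0 \<noteq> y1" using k0 r(2) vc by auto
  then have "subst (id(y1:=y2)) (POut k0 [y1] (PRep y1 bs1 S1)) = POut k0 [y2] (PRep y2 bs2 S2)" using r2 by simp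
  then have "sc \<Delta> (PApp F [k0]) (PRes y2 (POut k0 [y2] (PRep y2 bs2 S2)))" using 1 r(1) y2(3) by (metis sc_trans)
  then show ?thesis using y2 r(2) by blast
qed

lemma vemit_comm:
  fixes F :: "('s,'k) pabs"
  assumes vc: "v \<noteq> c" and F: "vshape v c F" and k0: "fst k0 = c" and b: "fst b = v" and bw: "b \<noteq> w1"
    and Y: "finite Y"
  shows "\<exists>E w2 S. rs \<Delta> (PPar (PApp F [k0]) (PIn k0 [b] (POut w1 [b,(c,0)] PNil))) E \<and>
     (E = PPar (POut w1 [w2,(c,0)] PNil) S \<or> (\<exists>y. y \<notin> Y \<and> E = PRes y (PPar (POut w1 [w2,(c,0)] PNil) S)))"
proof -
  let ?I = "PIn k0 [b] (POut w1 [b,(c,0)] (PNil::('s,'k) proc))"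
  have Y': "finite (Y \<union> fn ?I)" using Y finite_fn by auto
  have bc: "b \<noteq> (c,0)" using b vc by auto
  have sb: "subst (updg id [b] [w]) (POut w1 [b,(c,0)] (PNil::('s,'k) proc)) = POut w1 [w,(c,0)] PNil" for w
    using bw bc by auto
  from vshape_emit[OF vc F k0 Y', of \<Delta>] show ?thesis
  proof (elim disjE exE conjE)
    fix w assume h: "sc \<Delta> (PApp F [k0]) (POut k0 [w] PNil)"
    have "rs \<Delta> (PPar (PApp F [k0]) ?I) (PPar (POut k0 [w] PNil) ?I)" by (rule rs_sc, rule sc_par[OF h])
    also have "rs \<Delta> \<dots> (PPar (subst (updg id [b] [w]) (POut w1 [b,(c,0)] PNil)) PNil)" by (rule comm_rs') simp
    finally have "rs \<Delta> (PPar (PApp F [k0]) ?I) (PPar (POut w1 [w,(c,0)] PNil) PNil)" unfolding sb .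
    then show ?thesis by blast
  next
    fix y bs S assume y: "y \<notin> Y \<union> fn ?I" "fst y = v" and h: "sc \<Delta> (PApp F [k0]) (PRes y (POut k0 [y] (PRep y bs S)))"
    have "rs \<Delta> (PPar (PApp F [k0]) ?I) (PPar (PRes y (POut k0 [y] (PRep y bs S))) ?I)" by (rule rs_sc, rule sc_par[OF h])
    also have "rs \<Delta> \<dots> (PRes y (PPar (POut k0 [y] (PRep y bs S)) ?I))" by (rule rs_sc, rule sc_extr) (use y in auto)
    also have "rs \<Delta> \<dots> (PRes y (PPar (subst (updg id [b] [y]) (POut w1 [b,(c,0)] PNil)) (PRep y bs S)))"
      by (rule rs_res, rule comm_rs') simp
    finally have "rs \<Delta> (PPar (PApp F [k0]) ?I) (PRes y (PPar (POut w1 [y,(c,0)] PNil) (PRep y bs S)))" unfolding sb .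
    then show ?thesis using y by blast
  qed
qed


lemma top_shape:
  fixes F1 F2 :: "('s,'k) pabs"
  assumes vc: "v \<noteq> c"
  shows "\<exists>c1 v1 c2 v3 \<sigma> \<tau>. subst id (PRes (c,1) (PPar (PApp F1 [(c,1)]) (PIn (c,1) [(v,1)] (PRes (c,2) (PPar (PApp F2 [(c,2)]) (PIn (c,2) [(v,3)] (POut (v,1) [(v,3),(c,0)] PNil)))))))
     = PRes c1 (PPar (PApp (substa \<sigma> F1) [c1]) (PIn c1 [v1] (PRes c2 (PPar (PApp (substa \<tau> F2) [c2]) (PIn c2 [v3] (POut v1 [v3,(c,0)] PNil))))))
     \<and> (\<forall>n. \<sigma> (lvar v n) = lvar v n) \<and> fst c1 = c \<and> fst v1 = v \<and> fst c2 = c \<and> fst v3 = v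
     \<and> c1 \<noteq> (c,0) \<and> c2 \<noteq> (c,0) \<and> v3 \<noteq> v1"
proof -
  let ?O = "POut (v,1) [(v,3),(c,0)] (PNil::('s,'k) proc)"
  let ?R' = "PPar (PApp F2 [(c,2)]) (PIn (c,2) [(v,3)] ?O)"
  let ?R = "PRes (c,2) ?R'"
  let ?B1 = "PPar (PApp F1 [(c,1)]) (PIn (c,1) [(v,1)] ?R)"
  obtain c1 where c1: "subst id (PRes (c,1) ?B1) = PRes c1 (subst (id((c,1):=c1)) ?B1)" "fst c1 = fst (c,1::nat)"
    "c1 \<notin> id ` (fn ?B1 - {(c,1)})" by (rule S_res)
  define \<sigma> where "\<sigma> = id((c,1):=c1)"
  obtain v1 where v1: "subst \<sigma> (PIn (c,1) [(v,1)] ?R) = PIn (\<sigma> (c,1)) [v1] (subst (\<sigma>((v,1):=v1)) ?R)"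
    "fst v1 = fst (v,1::nat)" "v1 \<notin> \<sigma> ` (fn ?R - {(v,1)})" by (rule S_in1)
  define \<tau>0 where "\<tau>0 = \<sigma>((v,1):=v1)"
  obtain c2 where c2: "subst \<tau>0 ?R = PRes c2 (subst (\<tau>0((c,2):=c2)) ?R')" "fst c2 = fst (c,2::nat)"
    "c2 \<notin> \<tau>0 ` (fn ?R' - {(c,2)})" by (rule S_res)
  define \<tau> where "\<tau> = \<tau>0((c,2):=c2)"
  obtain v3 where v3: "subst \<tau> (PIn (c,2) [(v,3)] ?O) = PIn (\<tau> (c,2)) [v3] (subst (\<tau>((v,3):=v3)) ?O)"
    "fst v3 = fst (v,3::nat)" "v3 \<notin> \<tau> ` (fn ?O - {(v,3)})" by (rule S_in1)
  have ev: "\<sigma> (c,1) = c1" "\<tau> (c,2) = c2" "\<tau> (v,1) = v1" "\<tau> (c,0) = (c,0)" "\<tau>0 (c,0) = (c,0)"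
    using vc by (simp_all add: \<sigma>_def \<tau>_def \<tau>0_def)
  have eO: "subst (\<tau>((v,3):=v3)) ?O = POut v1 [v3,(c,0)] PNil"
    using ev v3(2) vc by simp
  have eq: "subst id (PRes (c,1) ?B1) = PRes c1 (PPar (PApp (substa \<sigma> F1) [c1]) (PIn c1 [v1] (PRes c2 (PPar (PApp (substa \<tau> F2) [c2]) (PIn c2 [v3] (POut v1 [v3,(c,0)] PNil))))))"
    using c1(1) v1(1) c2(1) v3(1) ev eO
    by (simp only: \<sigma>_def[symmetric] \<tau>0_def[symmetric] \<tau>_def[symmetric] subst.simps list.map)
  have m1: "(c,0) \<in> fn ?B1 - {(c,1)}" using vc by simp
  have m2: "(c,0) \<in> fn ?R' - {(c,2)}" using vc by simp
  have m3: "(v,1) \<in> fn ?O - {(v,3)}" by simp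
  have f1: "c1 \<noteq> (c,0)" using c1(3) m1 by force
  have f2: "c2 \<noteq> (c,0)" using c2(3) imageI[OF m2, of \<tau>0] ev by auto
  have f3: "v3 \<noteq> v1" using v3(3) imageI[OF m3, of \<tau>] ev by auto
  have f4: "\<forall>n. \<sigma> (lvar v n) = lvar v n" using vc by (simp add: \<sigma>_def lvar_def)
  show ?thesis
    apply (rule exI[of _ c1], rule exI[of _ v1], rule exI[of _ c2], rule exI[of _ v3], rule exI[of _ \<sigma>], rule exI[of _ \<tau>])
    using eq f1 f2 f3 f4 c1(2) v1(2) c2(2) v3(2) by simp
qed

lemma second:
  fixes F :: "('s,'k) pabs"
  assumes vc: "v \<noteq> c" and a: "fst c2 = c" "fst v3 = v" "fst v1 = v" "v3 \<noteq> v1" "c2 \<noteq> (c,0)"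
  shows "\<exists>c2' v3' \<rho>. subst (updg id [v1] [w1]) (PRes c2 (PPar (PApp F [c2]) (PIn c2 [v3] (POut v1 [v3,(c,0)] PNil))))
     = PRes c2' (PPar (PApp (substa \<rho> F) [c2']) (PIn c2' [v3'] (POut w1 [v3',(c,0)] PNil)))
     \<and> fst c2' = c \<and> fst v3' = v \<and> v3' \<noteq> w1 \<and> c2' \<noteq> (c,0)"
proof -
  let ?O = "POut v1 [v3,(c,0)] (PNil::('s,'k) proc)"
  let ?X = "PPar (PApp F [c2]) (PIn c2 [v3] ?O)"
  define \<rho>0 where "\<rho>0 = id(v1:=w1)"
  have u: "updg id [v1] [w1] = \<rho>0" by (simp add: \<rho>0_def)
  obtain c2' where c2': "subst \<rho>0 (PRes c2 ?X) = PRes c2' (subst (\<rho>0(c2:=c2')) ?X)" "fst c2' = fst c2"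
    "c2' \<notin> \<rho>0 ` (fn ?X - {c2})" by (rule S_res)
  define \<rho> where "\<rho> = \<rho>0(c2:=c2')"
  obtain v3' where v3': "subst \<rho> (PIn c2 [v3] ?O) = PIn (\<rho> c2) [v3'] (subst (\<rho>(v3:=v3')) ?O)"
    "fst v3' = fst v3" "v3' \<notin> \<rho> ` (fn ?O - {v3})" by (rule S_in1)
  have n1: "v1 \<noteq> c2" "(c,0) \<noteq> v3" "(c,0) \<noteq> v1" using a vc by auto
  have ev: "\<rho> c2 = c2'" "\<rho> v1 = w1" "\<rho>0 (c,0) = (c,0)" "\<rho> (c,0) = (c,0)"
    using n1 a by (auto simp: \<rho>_def \<rho>0_def)
  have eO: "subst (\<rho>(v3:=v3')) ?O = POut w1 [v3',(c,0)] PNil"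
    using ev n1 a by simp
  have eq: "subst \<rho>0 (PRes c2 ?X) = PRes c2' (PPar (PApp (substa \<rho> F) [c2']) (PIn c2' [v3'] (POut w1 [v3',(c,0)] PNil)))"
    using c2'(1) v3'(1) ev eO by (simp only: \<rho>_def[symmetric] subst.simps list.map)
  have m1: "(c,0) \<in> fn ?X - {c2}" using a vc by auto
  have m2: "v1 \<in> fn ?O - {v3}" using a by auto
  have f1: "c2' \<noteq> (c,0)" using c2'(3) imageI[OF m1, of \<rho>0] ev by auto
  have f2: "v3' \<noteq> w1" using v3'(3) imageI[OF m2, of \<rho>] ev by auto
  show ?thesis
    apply (rule exI[of _ c2'], rule exI[of _ v3'], rule exI[of _ \<rho>])
    using eq u f1 f2 c2'(2) v3'(2) a by simp
qed


lemma vshape_encV: "is_value V \<Longrightarrow> vshape v c (encV v c V)"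
  by (cases V) (auto simp: vshape_def)

lemma vshape_encV': "is_value V \<Longrightarrow> vshape v c (encV' v c V)"
  by (cases V) (auto simp: vshape_def)

lemma encV_x_out:
  fixes \<Delta> :: "('s,'k) defs"
  assumes vc: "v \<noteq> c" and s: "\<forall>n. \<sigma> (lvar v n) = lvar v n" and k0: "fst k0 = c"
  shows "sc \<Delta> (PApp (substa \<sigma> (encV v c (Var x))) [k0]) (POut k0 [lvar v x] (PNil::('s,'k) proc))"
proof -
  obtain k' where k': "substa \<sigma> (Abs [(c,0)] (POut (c,0) [lvar v x] (PNil::('s,'k) proc))) = Abs [k'] (subst (\<sigma>((c,0):=k')) (POut (c,0) [lvar v x] (PNil::('s,'k) proc)))"
    "fst k' = fst (c,0::nat)" by (rule S_abs1)
  have n: "lvar v x \<noteq> (c,0)" "lvar v x \<noteq> k'" using vc k'(2) by (auto simp: lvar_def)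
  have e: "substa \<sigma> (encV v c (Var x)) = Abs [k'] (POut k' [lvar v x] (PNil::('s,'k) proc))" using k'(1) n s by simp
  have "sc \<Delta> (PApp (Abs [k'] (POut k' [lvar v x] (PNil::('s,'k) proc))) [k0]) (subst (updg id [k'] [k0]) (POut k' [lvar v x] (PNil::('s,'k) proc)))"
    using sc_beta[of "[k']" "[k0]" \<Delta> "POut k' [lvar v x] (PNil::('s,'k) proc)"] by simp
  then show ?thesis using e n by simp
qed

lemma fwd_body:
  fixes P :: "('s,'k) proc"
  assumes "w \<noteq> a" "w \<noteq> b" "a \<noteq> b"
  shows "\<exists>a' b'. subst \<sigma> (POut k [y] (PRep y [a,b] (POut w [a,b] (PNil::('s,'k) proc)))) =
    POut (\<sigma> k) [\<sigma> y] (PRep (\<sigma> y) [a',b'] (POut (\<sigma> w) [a',b'] (PNil::('s,'k) proc))) \<and> a' \<noteq> b' \<and> \<sigma> w \<noteq> a' \<and> \<sigma> w \<noteq> b'"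
proof -
  obtain a' b' where r: "subst \<sigma> (PRep y [a,b] (POut w [a,b] (PNil::('s,'k) proc))) = PRep (\<sigma> y) [a',b'] (subst (\<sigma>(a:=a', b:=b')) (POut w [a,b] (PNil::('s,'k) proc)))"
    "fst a' = fst a" "fst b' = fst b" "a' \<noteq> b'"
    "a' \<notin> \<sigma> ` (fn (POut w [a,b] (PNil::('s,'k) proc)) - {a,b})" "b' \<notin> \<sigma> ` (fn (POut w [a,b] (PNil::('s,'k) proc)) - {a,b})"
    by (rule S_rep2)
  have m: "w \<in> fn (POut w [a,b] (PNil::('s,'k) proc)) - {a,b}" using assms by simp
  have f: "\<sigma> w \<noteq> a'" "\<sigma> w \<noteq> b'" using r(5,6) imageI[OF m, of \<sigma>] by auto
  have "subst (\<sigma>(a:=a', b:=b')) (POut w [a,b] (PNil::('s,'k) proc)) = POut (\<sigma> w) [a',b'] (PNil::('s,'k) proc)"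
    using assms by simp
  then show ?thesis using r(1,4) f by (intro exI[of _ a'] exI[of _ b']) simp
qed

lemma fwd_res:
  assumes "fst k \<noteq> fst y" "w \<noteq> y" "w \<noteq> a" "w \<noteq> b" "a \<noteq> b"
  shows "\<exists>y' a' b'. subst \<sigma> (PRes y (POut k [y] (PRep y [a,b] (POut w [a,b] (PNil::('s,'k) proc))))) =
    PRes y' (POut (\<sigma> k) [y'] (PRep y' [a',b'] (POut (\<sigma> w) [a',b'] (PNil::('s,'k) proc)))) \<and> fst y' = fst y \<and>
    a' \<noteq> b' \<and> \<sigma> w \<noteq> a' \<and> \<sigma> w \<noteq> b' \<and> \<sigma> w \<noteq> y'"
proof -
  let ?B = "POut k [y] (PRep y [a,b] (POut w [a,b] (PNil::('s,'k) proc)))"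
  obtain y' where r: "subst \<sigma> (PRes y ?B) = PRes y' (subst (\<sigma>(y:=y')) ?B)" "fst y' = fst y"
    "y' \<notin> \<sigma> ` (fn ?B - {y})" by (rule S_res)
  obtain a' b' where r2: "subst (\<sigma>(y:=y')) ?B = POut ((\<sigma>(y:=y')) k) [(\<sigma>(y:=y')) y] (PRep ((\<sigma>(y:=y')) y) [a',b'] (POut ((\<sigma>(y:=y')) w) [a',b'] (PNil::('s,'k) proc)))"
    "a' \<noteq> b'" "(\<sigma>(y:=y')) w \<noteq> a'" "(\<sigma>(y:=y')) w \<noteq> b'"
    using fwd_body[OF assms(3,4,5), of "\<sigma>(y:=y')" k y] by blast
  have m: "w \<in> fn ?B - {y}" using assms by simp
  have f: "\<sigma> w \<noteq> y'" using r(3) imageI[OF m, of \<sigma>] by auto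
  have ky: "k \<noteq> y" using assms by auto
  show ?thesis using r r2 f ky assms by (intro exI[of _ y'] exI[of _ a'] exI[of _ b']) simp
qed

lemma encV'_x_out:
  fixes \<Delta> :: "('s,'k) defs"
  assumes vc: "v \<noteq> c" and s: "\<forall>n. \<sigma> (lvar v n) = lvar v n" and k0: "fst k0 = c" and Y: "finite Y"
  shows "\<exists>yx a b. yx \<notin> Y \<and> fst yx = v \<and> a \<noteq> b \<and> lvar v x \<noteq> a \<and> lvar v x \<noteq> b \<and>
    sc \<Delta> (PApp (substa \<sigma> (encV' v c (Var x))) [k0]) (PRes yx (POut k0 [yx] (PRep yx [a,b] (POut (lvar v x) [a,b] (PNil::('s,'k) proc)))))"
proof -
  let ?x = "lvar v x"
  let ?B = "PRes (v,1) (POut (c,0) [(v,1)] (PRep (v,1) [(v,5),(c,1)] (POut ?x [(v,5),(c,1)] (PNil::('s,'k) proc))))"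
  have encx: "encV' v c (Var x) = Abs [(c,0)] ?B" by (simp add: lvar_def)
  obtain k' where k': "substa \<sigma> (Abs [(c,0)] ?B) = Abs [k'] (subst (\<sigma>((c,0):=k')) ?B)" "fst k' = fst (c,0::nat)" by (rule S_abs1)
  have nx: "?x \<noteq> (v,1)" "?x \<noteq> (v,5)" "?x \<noteq> (c,1)" "(v,5) \<noteq> (c,1)" "fst (c,0::nat) \<noteq> fst (v,1::nat)" "?x \<noteq> (c,0)"
    using vc by (auto simp: lvar_def)
  obtain y1 a1 b1 where 1: "subst (\<sigma>((c,0):=k')) ?B = PRes y1 (POut ((\<sigma>((c,0):=k')) (c,0)) [y1] (PRep y1 [a1,b1] (POut ((\<sigma>((c,0):=k')) ?x) [a1,b1] (PNil::('s,'k) proc))))"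
    "fst y1 = fst (v,1::nat)" "a1 \<noteq> b1" "(\<sigma>((c,0):=k')) ?x \<noteq> a1" "(\<sigma>((c,0):=k')) ?x \<noteq> b1" "(\<sigma>((c,0):=k')) ?x \<noteq> y1"
    using fwd_res[OF nx(5) nx(1) nx(2) nx(3) nx(4), of "\<sigma>((c,0):=k')"] by blast
  have sx: "(\<sigma>((c,0):=k')) ?x = ?x" using s nx by simp
  have e1: "substa \<sigma> (encV' v c (Var x)) = Abs [k'] (PRes y1 (POut k' [y1] (PRep y1 [a1,b1] (POut ?x [a1,b1] (PNil::('s,'k) proc)))))"
    using encx k'(1) 1(1) sx by simp
  let ?C = "PRes y1 (POut k' [y1] (PRep y1 [a1,b1] (POut ?x [a1,b1] (PNil::('s,'k) proc))))"
  have b1: "sc \<Delta> (PApp (Abs [k'] ?C) [k0]) (subst (updg id [k'] [k0]) ?C)"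
    using sc_beta[of "[k']" "[k0]" \<Delta> ?C] by simp
  have ky1: "fst k' \<noteq> fst y1" using k'(2) 1(2) vc by simp
  have n1: "?x \<noteq> y1" "?x \<noteq> a1" "?x \<noteq> b1" using 1(4,5,6) sx by auto
  obtain y2 a2 b2 where 2: "subst (updg id [k'] [k0]) ?C = PRes y2 (POut ((updg id [k'] [k0]) k') [y2] (PRep y2 [a2,b2] (POut ((updg id [k'] [k0]) ?x) [a2,b2] (PNil::('s,'k) proc))))"
    "fst y2 = fst y1" "a2 \<noteq> b2" "(updg id [k'] [k0]) ?x \<noteq> a2" "(updg id [k'] [k0]) ?x \<noteq> b2" "(updg id [k'] [k0]) ?x \<noteq> y2"
    using fwd_res[OF ky1 n1 1(3), of "updg id [k'] [k0]"] by blast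
  have xk: "?x \<noteq> k'" using k'(2) vc by (auto simp: lvar_def)
  have ux: "(updg id [k'] [k0]) ?x = ?x" "(updg id [k'] [k0]) k' = k0" using xk by simp_all
  let ?D = "POut k0 [y2] (PRep y2 [a2,b2] (POut ?x [a2,b2] (PNil::('s,'k) proc)))"
  obtain y3 where y3: "y3 \<notin> Y" "fst y3 = fst y2" "sc \<Delta> (PRes y2 ?D) (PRes y3 (subst (id(y2:=y3)) ?D))"
    using alpha_fresh[OF Y] by blast
  have n2: "?x \<noteq> a2" "?x \<noteq> b2" "?x \<noteq> y2" using 2(4,5,6) ux by auto
  obtain a3 b3 where 3: "subst (id(y2:=y3)) ?D = POut ((id(y2:=y3)) k0) [(id(y2:=y3)) y2] (PRep ((id(y2:=y3)) y2) [a3,b3] (POut ((id(y2:=y3)) ?x) [a3,b3] (PNil::('s,'k) proc)))"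
    "a3 \<noteq> b3" "(id(y2:=y3)) ?x \<noteq> a3" "(id(y2:=y3)) ?x \<noteq> b3"
    using fwd_body[OF n2(1,2) 2(3), of "id(y2:=y3)" k0 y2] by blast
  have k0y2: "k0 \<noteq> y2" using k0 2(2) 1(2) vc by auto
  have e3: "subst (id(y2:=y3)) ?D = POut k0 [y3] (PRep y3 [a3,b3] (POut ?x [a3,b3] (PNil::('s,'k) proc)))"
    "?x \<noteq> a3" "?x \<noteq> b3" using 3 k0y2 n2 by auto
  have "sc \<Delta> (PApp (substa \<sigma> (encV' v c (Var x))) [k0]) (PRes y3 (POut k0 [y3] (PRep y3 [a3,b3] (POut ?x [a3,b3] (PNil::('s,'k) proc)))))"
  proof -
    have b: "subst (updg id [k'] [k0]) ?C = PRes y2 ?D" using 2(1) ux by simp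
    have "sc \<Delta> (PApp (Abs [k'] ?C) [k0]) (PRes y2 ?D)" using b1 unfolding b .
    then have "sc \<Delta> (PApp (Abs [k'] ?C) [k0]) (PRes y3 (subst (id(y2:=y3)) ?D))" using y3(3) by (rule sc_trans)
    then show ?thesis unfolding e1 e3(1) .
  qed
  moreover have "fst y3 = v" using y3(2) 2(2) 1(2) by simp
  ultimately show ?thesis using y3(1) 3(2) e3(2,3) by blast
qed


lemma sc_parr: "sc \<Delta> P Q \<Longrightarrow> sc \<Delta> (PPar R P) (PPar R Q)"
  by (meson sc_par sc_par_comm sc_trans)

lemma fn_ctx: "fn (ctx v c x :: ('s,'k) proc) \<subseteq> {lvar v x, (c,0), lvar v (Suc x)}"
  by (auto simp: ctx_def)

lemma notin_ctx:
  assumes "fst a \<noteq> fst (lvar v x) \<or> (a \<noteq> lvar v x \<and> a \<noteq> lvar v (Suc x))" "a \<noteq> (c,0)"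
  shows "a \<notin> fn (ctx v c x :: ('s,'k) proc)"
  using fn_ctx[of v c x] assms by (auto simp: lvar_def)

lemma finite_Y: "finite (fn (ctx v c x :: ('s,'k) proc) \<union> {lvar v (Suc x)})"
  using finite_fn by simp

lemma good1:
  fixes \<Delta> :: "('s,'k) defs"
  assumes vc: "v \<noteq> c" and V: "is_value V"
  shows "\<exists>E. rs \<Delta> (PApp (encV v c (LApp (Var x) V)) [(c,0)]) E \<and> hasx v c x E"
proof -
  let ?F1 = "encV v c (Var x) :: ('s,'k) pabs"
  let ?F2 = "encV v c V :: ('s,'k) pabs"
  let ?N = "PNil :: ('s,'k) proc"
  let ?B = "PRes (c,1) (PPar (PApp ?F1 [(c,1)]) (PIn (c,1) [(v,1)] (PRes (c,2) (PPar (PApp ?F2 [(c,2)]) (PIn (c,2) [(v,3)] (POut (v,1) [(v,3),(c,0)] ?N))))))"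
  let ?Y = "fn (ctx v c x :: ('s,'k) proc) \<union> {lvar v (Suc x)}"
  have enc: "encV v c (LApp (Var x) V) = Abs [(c,0)] ?B" by (simp only: encV.simps(3))
  have u: "upds id [(c,0)] [(c,0)] = id" by (simp add: fun_eq_iff)
  have s0': "sc \<Delta> (PApp (Abs [(c,0)] ?B) [(c,0)]) (subst (upds id [(c,0)] [(c,0)]) ?B)"
    by (rule sc_beta) simp
  have s0: "sc \<Delta> (PApp (Abs [(c,0)] ?B) [(c,0)]) (subst id ?B)"
    using s0' unfolding u .
  obtain c1 v1 c2 v3 \<sigma> \<tau> where T: "subst id ?B = PRes c1 (PPar (PApp (substa \<sigma> ?F1) [c1]) (PIn c1 [v1] (PRes c2 (PPar (PApp (substa \<tau> ?F2) [c2]) (PIn c2 [v3] (POut v1 [v3,(c,0)] ?N))))))"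
    "\<forall>n. \<sigma> (lvar v n) = lvar v n" "fst c1 = c" "fst v1 = v" "fst c2 = c" "fst v3 = v"
    "c1 \<noteq> (c,0)" "c2 \<noteq> (c,0)" "v3 \<noteq> v1"
    using top_shape[OF vc, of ?F1 ?F2] by blast
  let ?R1 = "PRes c2 (PPar (PApp (substa \<tau> ?F2) [c2]) (PIn c2 [v3] (POut v1 [v3,(c,0)] ?N)))"
  have s1: "sc \<Delta> (PApp (substa \<sigma> ?F1) [c1]) (POut c1 [lvar v x] ?N)" by (rule encV_x_out[OF vc T(2) T(3)])
  have r1: "rs \<Delta> (PApp (encV v c (LApp (Var x) V)) [(c,0)]) (PRes c1 (PPar (POut c1 [lvar v x] ?N) (PIn c1 [v1] ?R1)))"
  proof -
    have "sc \<Delta> (PApp (encV v c (LApp (Var x) V)) [(c,0)]) (subst id ?B)" using s0 unfolding enc .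
    also have "sc \<Delta> (subst id ?B) (PRes c1 (PPar (POut c1 [lvar v x] ?N) (PIn c1 [v1] ?R1)))"
      unfolding T(1) by (rule sc_res, rule sc_par, rule s1)
    finally show ?thesis by (rule rs_sc)
  qed
  have r2: "rs \<Delta> (PRes c1 (PPar (POut c1 [lvar v x] ?N) (PIn c1 [v1] ?R1))) (PRes c1 (PPar (subst (updg id [v1] [lvar v x]) ?R1) ?N))"
    by (rule rs_res, rule comm_rs') simp
  obtain c2' v3' \<rho> where S: "subst (updg id [v1] [lvar v x]) ?R1 = PRes c2' (PPar (PApp (substa \<rho> (substa \<tau> ?F2)) [c2']) (PIn c2' [v3'] (POut (lvar v x) [v3',(c,0)] ?N)))"
    "fst c2' = c" "fst v3' = v" "v3' \<noteq> lvar v x" "c2' \<noteq> (c,0)"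
    using second[OF vc T(5) T(6) T(4) T(9) T(8), where F="substa \<tau> ?F2" and ?w1.0="lvar v x"] by blast
  have vs: "vshape v c (substa \<rho> (substa \<tau> ?F2))"
    by (intro vshape_subst[OF vc] vshape_encV V)
  obtain E2 w2 S2 where E2: "rs \<Delta> (PPar (PApp (substa \<rho> (substa \<tau> ?F2)) [c2']) (PIn c2' [v3'] (POut (lvar v x) [v3',(c,0)] ?N))) E2"
    "E2 = PPar (POut (lvar v x) [w2,(c,0)] ?N) S2 \<or> (\<exists>y. y \<notin> ?Y \<and> E2 = PRes y (PPar (POut (lvar v x) [w2,(c,0)] ?N) S2))"
    using vemit_comm[OF vc vs S(2) S(3) S(4) finite_Y, of \<Delta>] by blast
  have r3: "rs \<Delta> (PRes c1 (PPar (subst (updg id [v1] [lvar v x]) ?R1) ?N)) (PRes c1 (PPar (PRes c2' E2) ?N))"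
    unfolding S(1) by (rule rs_res, rule rs_parl, rule rs_res, rule E2(1))
  have h2: "hasx v c x E2"
    using E2(2)
  proof (elim disjE exE conjE)
    assume "E2 = PPar (POut (lvar v x) [w2,(c,0)] ?N) S2" then show ?thesis by (simp add: hx_parl hx_base)
  next
    fix y assume "y \<notin> ?Y" "E2 = PRes y (PPar (POut (lvar v x) [w2,(c,0)] ?N) S2)"
    then show ?thesis by (auto intro!: hx_res hx_parl hx_base)
  qed
  have nc1: "c1 \<notin> fn (ctx v c x :: ('s,'k) proc)" "c1 \<noteq> lvar v (Suc x)" using T(3,7) vc notin_ctx[of c1 v x c] by (auto simp: lvar_def)
  have nc2: "c2' \<notin> fn (ctx v c x :: ('s,'k) proc)" "c2' \<noteq> lvar v (Suc x)" using S(2,5) vc notin_ctx[of c2' v x c] by (auto simp: lvar_def)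
  have "hasx v c x (PRes c1 (PPar (PRes c2' E2) ?N))"
    by (intro hx_res hx_parl h2 nc1 nc2)
  then show ?thesis using rs_trans[OF r1 rs_trans[OF r2 r3]] by blast
qed

lemma fwd_fire:
  fixes \<Delta> :: "('s,'k) defs"
  assumes ab: "a \<noteq> b" "lvar v x \<noteq> a" "lvar v x \<noteq> b"
  shows "\<exists>E. rs \<Delta> (PPar (PPar (POut yx [w2,(c,0)] (PNil::('s,'k) proc)) S2) (PRep yx [a,b] (POut (lvar v x) [a,b] PNil))) E \<and> hasx v c x E"
proof -
  let ?N = "PNil :: ('s,'k) proc"
  let ?O = "POut yx [w2,(c,0)] ?N"
  let ?Bd = "POut (lvar v x) [a,b] ?N"
  let ?SX = "PRep yx [a,b] ?Bd"
  have "sc \<Delta> (PPar (PPar ?O S2) ?SX) (PPar ?O (PPar S2 ?SX))" by (rule sc_par_assoc)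
  also have "sc \<Delta> \<dots> (PPar ?O (PPar ?SX S2))" by (rule sc_parr, rule sc_par_comm)
  also have "sc \<Delta> \<dots> (PPar (PPar ?O ?SX) S2)" by (rule sc_sym, rule sc_par_assoc)
  also have "sc \<Delta> \<dots> (PPar (PPar ?O (PPar (PIn yx [a,b] ?Bd) ?SX)) S2)" by (rule sc_par, rule sc_parr, rule sc_rep_unfold)
  also have "sc \<Delta> \<dots> (PPar (PPar (PPar ?O (PIn yx [a,b] ?Bd)) ?SX) S2)" by (rule sc_par, rule sc_sym, rule sc_par_assoc)
  finally have 1: "rs \<Delta> (PPar (PPar ?O S2) ?SX) (PPar (PPar (PPar ?O (PIn yx [a,b] ?Bd)) ?SX) S2)" by (rule rs_sc)
  have 2: "rs \<Delta> (PPar (PPar (PPar ?O (PIn yx [a,b] ?Bd)) ?SX) S2) (PPar (PPar (PPar (subst (updg id [a,b] [w2,(c,0)]) ?Bd) ?N) ?SX) S2)"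
    by (rule rs_parl, rule rs_parl, rule comm_rs') simp
  have e: "subst (updg id [a,b] [w2,(c,0)]) ?Bd = POut (lvar v x) [w2,(c,0)] ?N" using ab by simp
  have "hasx v c x (PPar (PPar (PPar (POut (lvar v x) [w2,(c,0)] ?N) ?N) ?SX) S2)"
    by (intro hx_parl hx_base)
  then show ?thesis using rs_trans[OF 1 2] unfolding e by blast
qed

lemma good2:
  fixes \<Delta> :: "('s,'k) defs"
  assumes vc: "v \<noteq> c" and V: "is_value V"
  shows "\<exists>E. rs \<Delta> (PApp (encV' v c (LApp (Var x) V)) [(c,0)]) E \<and> hasx v c x E"
proof -
  let ?F1 = "encV' v c (Var x) :: ('s,'k) pabs"
  let ?F2 = "encV' v c V :: ('s,'k) pabs"
  let ?N = "PNil :: ('s,'k) proc"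
  let ?B = "PRes (c,1) (PPar (PApp ?F1 [(c,1)]) (PIn (c,1) [(v,1)] (PRes (c,2) (PPar (PApp ?F2 [(c,2)]) (PIn (c,2) [(v,3)] (POut (v,1) [(v,3),(c,0)] ?N))))))"
  let ?Y = "fn (ctx v c x :: ('s,'k) proc) \<union> {lvar v (Suc x)}"
  have enc: "encV' v c (LApp (Var x) V) = Abs [(c,0)] ?B" by (simp only: encV'.simps(3))
  have u: "upds id [(c,0)] [(c,0)] = id" by (simp add: fun_eq_iff)
  have s0': "sc \<Delta> (PApp (Abs [(c,0)] ?B) [(c,0)]) (subst (upds id [(c,0)] [(c,0)]) ?B)"
    by (rule sc_beta) simp
  have s0: "sc \<Delta> (PApp (Abs [(c,0)] ?B) [(c,0)]) (subst id ?B)"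
    using s0' unfolding u .
  obtain c1 v1 c2 v3 \<sigma> \<tau> where T: "subst id ?B = PRes c1 (PPar (PApp (substa \<sigma> ?F1) [c1]) (PIn c1 [v1] (PRes c2 (PPar (PApp (substa \<tau> ?F2) [c2]) (PIn c2 [v3] (POut v1 [v3,(c,0)] ?N))))))"
    "\<forall>n. \<sigma> (lvar v n) = lvar v n" "fst c1 = c" "fst v1 = v" "fst c2 = c" "fst v3 = v"
    "c1 \<noteq> (c,0)" "c2 \<noteq> (c,0)" "v3 \<noteq> v1"
    using top_shape[OF vc, of ?F1 ?F2] by blast
  let ?R1 = "PRes c2 (PPar (PApp (substa \<tau> ?F2) [c2]) (PIn c2 [v3] (POut v1 [v3,(c,0)] ?N)))"
  let ?I1 = "PIn c1 [v1] ?R1"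
  have fY1: "finite (fn ?I1 \<union> ?Y)" by (intro finite_UnI finite_fn(1) finite_Y)
  obtain yx a b where X: "yx \<notin> fn ?I1 \<union> ?Y" "fst yx = v" "a \<noteq> b" "lvar v x \<noteq> a" "lvar v x \<noteq> b"
    "sc \<Delta> (PApp (substa \<sigma> ?F1) [c1]) (PRes yx (POut c1 [yx] (PRep yx [a,b] (POut (lvar v x) [a,b] ?N))))"
    using encV'_x_out[OF vc T(2) T(3) fY1, where \<Delta>=\<Delta> and x=x] by blast
  let ?SX = "PRep yx [a,b] (POut (lvar v x) [a,b] ?N)"
  have r1: "rs \<Delta> (PApp (encV' v c (LApp (Var x) V)) [(c,0)]) (PRes c1 (PRes yx (PPar (POut c1 [yx] ?SX) ?I1)))"
  proof -
    have "sc \<Delta> (PApp (encV' v c (LApp (Var x) V)) [(c,0)]) (subst id ?B)" using s0 unfolding enc .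
    also have "sc \<Delta> (subst id ?B) (PRes c1 (PPar (PRes yx (POut c1 [yx] ?SX)) ?I1))"
      unfolding T(1) by (rule sc_res, rule sc_par, rule X(6))
    also have "sc \<Delta> \<dots> (PRes c1 (PRes yx (PPar (POut c1 [yx] ?SX) ?I1)))"
      by (rule sc_res, rule sc_extr) (use X(1) in blast)
    finally show ?thesis by (rule rs_sc)
  qed
  have r2: "rs \<Delta> (PRes c1 (PRes yx (PPar (POut c1 [yx] ?SX) ?I1))) (PRes c1 (PRes yx (PPar (subst (updg id [v1] [yx]) ?R1) ?SX)))"
    by (rule rs_res, rule rs_res, rule comm_rs') simp
  obtain c2' v3' \<rho> where S: "subst (updg id [v1] [yx]) ?R1 = PRes c2' (PPar (PApp (substa \<rho> (substa \<tau> ?F2)) [c2']) (PIn c2' [v3'] (POut yx [v3',(c,0)] ?N)))"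
    "fst c2' = c" "fst v3' = v" "v3' \<noteq> yx" "c2' \<noteq> (c,0)"
    using second[OF vc T(5) T(6) T(4) T(9) T(8), where F="substa \<tau> ?F2" and ?w1.0="yx"] by blast
  have vs: "vshape v c (substa \<rho> (substa \<tau> ?F2))"
    by (intro vshape_subst[OF vc] vshape_encV' V)
  let ?Y2 = "?Y \<union> {yx, lvar v x}"
  have fY2: "finite ?Y2" by (intro finite_UnI finite_Y) simp
  obtain E2 w2 S2 where E2: "rs \<Delta> (PPar (PApp (substa \<rho> (substa \<tau> ?F2)) [c2']) (PIn c2' [v3'] (POut yx [v3',(c,0)] ?N))) E2"
    "E2 = PPar (POut yx [w2,(c,0)] ?N) S2 \<or> (\<exists>y. y \<notin> ?Y2 \<and> E2 = PRes y (PPar (POut yx [w2,(c,0)] ?N) S2))"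
    using vemit_comm[OF vc vs S(2) S(3) S(4) fY2, of \<Delta>] by blast
  have r3: "rs \<Delta> (PRes c1 (PRes yx (PPar (subst (updg id [v1] [yx]) ?R1) ?SX))) (PRes c1 (PRes yx (PPar (PRes c2' E2) ?SX)))"
    unfolding S(1) by (rule rs_res, rule rs_res, rule rs_parl, rule rs_res, rule E2(1))
  have fnSX: "fn ?SX \<subseteq> {yx, lvar v x}" by auto
  have nc1: "c1 \<notin> fn (ctx v c x :: ('s,'k) proc)" "c1 \<noteq> lvar v (Suc x)" using T(3,7) vc notin_ctx[of c1 v x c] by (auto simp: lvar_def)
  have nc2: "c2' \<notin> fn (ctx v c x :: ('s,'k) proc)" "c2' \<noteq> lvar v (Suc x)" using S(2,5) vc notin_ctx[of c2' v x c] by (auto simp: lvar_def)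
  have nyx: "yx \<notin> fn (ctx v c x :: ('s,'k) proc)" "yx \<noteq> lvar v (Suc x)" using X(1) by auto
  have c2n: "c2' \<noteq> yx" "c2' \<noteq> lvar v x" using S(2) X(2) vc unfolding lvar_def by (metis fst_conv)+
  have c2SX: "c2' \<notin> fn ?SX" using fnSX c2n by blast
  have r4: "rs \<Delta> (PPar (PRes c2' E2) ?SX) (PRes c2' (PPar E2 ?SX))" by (rule rs_sc, rule sc_extr[OF c2SX])
  obtain E' where E': "rs \<Delta> (PPar E2 ?SX) E'" "hasx v c x E'"
    using E2(2)
  proof (elim disjE exE conjE)
    assume e: "E2 = PPar (POut yx [w2,(c,0)] ?N) S2"
    show ?thesis using fwd_fire[OF X(3,4,5), where \<Delta>=\<Delta> and yx=yx and ?w2.0=w2 and c=c and ?S2.0=S2] that unfolding e by blast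
  next
    fix y assume y: "y \<notin> ?Y2" and e: "E2 = PRes y (PPar (POut yx [w2,(c,0)] ?N) S2)"
    have ySX: "y \<notin> fn ?SX" using y fnSX by blast
    obtain E0 where E0: "rs \<Delta> (PPar (PPar (POut yx [w2,(c,0)] ?N) S2) ?SX) E0" "hasx v c x E0"
      using fwd_fire[OF X(3,4,5), where \<Delta>=\<Delta> and yx=yx and ?w2.0=w2 and c=c and ?S2.0=S2] by blast
    have "rs \<Delta> (PPar E2 ?SX) (PRes y E0)"
      unfolding e using rs_trans[OF rs_sc[OF sc_extr[OF ySX]] rs_res[OF E0(1)]] .
    moreover have "hasx v c x (PRes y E0)" using E0(2) y by (intro hx_res) auto
    ultimately show ?thesis using that by blast
  qed
  have "hasx v c x (PRes c1 (PRes yx (PRes c2' E')))"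
    by (intro hx_res E'(2) nc1 nc2 nyx)
  moreover have "rs \<Delta> (PApp (encV' v c (LApp (Var x) V)) [(c,0)]) (PRes c1 (PRes yx (PRes c2' E')))"
    using rs_trans[OF r1 rs_trans[OF r2 rs_trans[OF r3 rs_res[OF rs_res[OF rs_trans[OF r4 rs_res[OF E'(1)]]]]]]] .
  ultimately show ?thesis by blast
qed


lemma bisim_wbarb: "bbisimilar \<Delta> P Q \<Longrightarrow> wbarb \<Delta> P a = wbarb \<Delta> Q a"
  unfolding bbisimilar_def is_bbisim_def by blast

lemma fill_ctx: "fill (ctx v c x) A = ctx v c x"
  by (simp add: ctx_def)

lemma distinguish:
  assumes "ws ob \<Delta> (asort \<Delta> A) C" "nholes C = 1" "wbarb \<Delta> (fill C B) a" "\<not> wbarb \<Delta> (fill C A) a"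
  shows "\<not> bcong ob \<Delta> A B"
  using assms bisim_wbarb unfolding bcong_def by blast

theorem proposition3p1:
  fixes ob :: "'s \<Rightarrow> 's list" and v c :: 's and \<Delta> :: "('s,'k) defs"
    and V :: lterm and x z :: nat
  assumes "v \<noteq> c" and "ob v = [v, c]" and "ob c = [v]" and "wf_defs ob \<Delta>"
    and "is_value V"
  shows "\<not> bcong ob \<Delta> (encV' v c (LApp (Lam z (Var z)) (LApp (Var x) V))) (encV' v c (LApp (Var x) V))
       \<and> \<not> bcong ob \<Delta> (encV v c (LApp (Lam z (Var z)) (LApp (Var x) V))) (encV v c (LApp (Var x) V))"
proof -
  note vc = assms(1) and wf = assms(4) and V = assms(5)
  let ?C = "PPar (Hole [(c,0)]) (ctx v c x) :: ('s,'k) proc"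
  let ?ok = "lvar v (Suc x)"
  have wsC: "ws ob \<Delta> [c] ?C" using assms(1-3) by (simp add: ctx_def lvar_def)
  have nh: "nholes ?C = 1" by (simp add: ctx_def)
  have G0ok: "G0 v c x ?ok = TD" using vc by (simp add: G0_def lvar_def)
  have fillC: "fill ?C A = PPar (PApp A [(c,0)]) (ctx v c x)" for A by (simp add: fill_ctx)
  have good: "wbarb \<Delta> (PPar (PApp B [(c,0)]) (ctx v c x)) ?ok"
    if h: "\<exists>E. rs \<Delta> (PApp B [(c,0)]) E \<and> hasx v c x E" for B
  proof -
    obtain E where E: "rs \<Delta> (PApp B [(c,0)]) E" "hasx v c x E" using h by blast
    obtain Q where Q: "rs \<Delta> (PPar E (ctx v c x)) Q" "obs ?ok Q" using hasx_reach[OF vc E(2)] by blast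
    show ?thesis using rs_wbarb[OF rs_trans[OF rs_parl[OF E(1)] Q(1)] Q(2)] .
  qed
  have bad: "\<not> wbarb \<Delta> (PPar (PApp A [(c,0)]) (ctx v c x)) ?ok"
    if "typed \<Delta> (G0 v c x) (PApp A [(c,0)])" for A
    using no_wbarb[OF wf t_par[OF that typed_ctx[OF wf vc]] G0ok] .
  have 1: "\<not> bcong ob \<Delta> (encV' v c (LApp (Lam z (Var z)) (LApp (Var x) V))) (encV' v c (LApp (Var x) V))"
  proof (rule distinguish[where C="?C" and a="?ok"])
    show "ws ob \<Delta> (asort \<Delta> (encV' v c (LApp (Lam z (Var z)) (LApp (Var x) V)))) ?C" using wsC by simp
    show "nholes ?C = 1" by (rule nh)
    show "wbarb \<Delta> (fill ?C (encV' v c (LApp (Var x) V))) ?ok" unfolding fillC by (rule good[OF good2[OF vc V]])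
    show "\<not> wbarb \<Delta> (fill ?C (encV' v c (LApp (Lam z (Var z)) (LApp (Var x) V)))) ?ok"
      unfolding fillC by (rule bad[OF typed_bad2[OF wf vc V]])
  qed
  have 2: "\<not> bcong ob \<Delta> (encV v c (LApp (Lam z (Var z)) (LApp (Var x) V))) (encV v c (LApp (Var x) V))"
  proof (rule distinguish[where C="?C" and a="?ok"])
    show "ws ob \<Delta> (asort \<Delta> (encV v c (LApp (Lam z (Var z)) (LApp (Var x) V)))) ?C" using wsC by simp
    show "nholes ?C = 1" by (rule nh)
    show "wbarb \<Delta> (fill ?C (encV v c (LApp (Var x) V))) ?ok" unfolding fillC by (rule good[OF good1[OF vc V]])
    show "\<not> wbarb \<Delta> (fill ?C (encV v c (LApp (Lam z (Var z)) (LApp (Var x) V)))) ?ok"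
      unfolding fillC by (rule bad[OF typed_bad1[OF wf vc V]])
  qed
  show ?thesis using 1 2 by blast
qed


end
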